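(* Define $\varphi_0:[-\pi,\pi]\to\mathbb{R}$ by $\varphi_0(x)=1+\left(1+\frac1\pi\right)x$ for $-\pi\le x<0$ and $\varphi_0(x)=1+\left(1-\frac1\pi\right)x$ for $0\le x\le\pi$, extend it to $\varphi:\mathbb{R}\to\mathbb{R}$ by $\varphi(x+2k\pi)=\varphi_0(x)+2k\pi$ for $x\in[-\pi,\pi]$, $k\in\mathbb{Z}$, and set $F(e^{ix})=e^{i\varphi(x)}$. Then: (A1) $t\mapsto F(e^{it})$ is absolutely continuous and $\dot F\in L^\infty(0,2\pi)$, where $\dot F(e^{it})=\frac{d}{dt}F(e^{it})$; (A2) $w=P[F]$ is a harmonic mapping of $\mathbb{D}$ into $\mathbb{D}$ which is not quasiregular; (A3) $w_z\notin L^\infty(\mathbb{D})$.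
   Context: $\mathbb{D}$ is the open unit disk. $P[F](re^{i\theta})=\int_0^{2\pi}P_r(t-\theta)F(e^{it})\,dt$ with $P_r(t-\theta)=\frac{1}{2\pi}\frac{1-r^2}{1-2r\cos(t-\theta)+r^2}$. $w_z=\frac12(w_x-iw_y)$, $w_{\bar z}=\frac12(w_x+iw_y)$. A harmonic mapping $w$ of $\mathbb{D}$ is quasiregular if there is a constant $K\ge1$ with $(|w_z|+|w_{\bar z}|)^2\le K(|w_z|^2-|w_{\bar z}|^2)$ in $\mathbb{D}$. $L^\infty(\mathbb{D})$ is the space of essentially bounded functions on $\mathbb{D}$. *)

theory Defs
  imports "HOL-Analysis.Analysis"
begin

definition phi0 :: "real \<Rightarrow> real" where
  "phi0 x = (if x < 0 then 1 + (1 + 1/pi) * x else 1 + (1 - 1/pi) * x)"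

definition phi :: "real \<Rightarrow> real" where
  "phi x = (let k = real_of_int \<lfloor>(x + pi) / (2*pi)\<rfloor> in phi0 (x - 2*k*pi) + 2*k*pi)"

definition Fb :: "complex \<Rightarrow> complex" where
  "Fb z = exp (\<i> * complex_of_real (phi (Arg z)))"

definition poisson_kernel :: "real \<Rightarrow> real \<Rightarrow> real" where
  "poisson_kernel r s = (1 / (2*pi)) * ((1 - r^2) / (1 - 2*r*cos s + r^2))"

definition poisson_integral :: "(complex \<Rightarrow> complex) \<Rightarrow> complex \<Rightarrow> complex" where
  "poisson_integral F z =
     integral {0..2*pi} (\<lambda>t. complex_of_real (poisson_kernel (cmod z) (t - Arg z)) * F (exp (\<i> * complex_of_real t)))"

definition abs_continuous_on :: "real set \<Rightarrow> (real \<Rightarrow> 'b::real_normed_vector) \<Rightarrow> bool" where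
  "abs_continuous_on S f \<longleftrightarrow>
     (\<forall>\<epsilon>>0. \<exists>\<delta>>0. \<forall>(n::nat) (a::nat \<Rightarrow> real) (b::nat \<Rightarrow> real).
        (\<forall>i<n. a i \<le> b i \<and> {a i..b i} \<subseteq> S) \<and>
        (\<forall>i<n. \<forall>j<n. i \<noteq> j \<longrightarrow> b i \<le> a j \<or> b j \<le> a i) \<and>
        (\<Sum>i<n. b i - a i) < \<delta>
        \<longrightarrow> (\<Sum>i<n. norm (f (b i) - f (a i))) < \<epsilon>)"

definition in_Linf :: "'a::euclidean_space set \<Rightarrow> ('a \<Rightarrow> 'b::{real_normed_vector, second_countable_topology}) \<Rightarrow> bool" where
  "in_Linf S g \<longleftrightarrow> g \<in> borel_measurable (lebesgue_on S) \<and> (\<exists>M. AE x in lebesgue_on S. norm (g x) \<le> M)"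

definition dx :: "(complex \<Rightarrow> complex) \<Rightarrow> complex \<Rightarrow> complex" where
  "dx w z = vector_derivative (\<lambda>s::real. w (z + complex_of_real s)) (at 0)"
definition dy :: "(complex \<Rightarrow> complex) \<Rightarrow> complex \<Rightarrow> complex" where
  "dy w z = vector_derivative (\<lambda>s::real. w (z + \<i> * complex_of_real s)) (at 0)"

definition dz :: "(complex \<Rightarrow> complex) \<Rightarrow> complex \<Rightarrow> complex" where
  "dz w z = (dx w z - \<i> * dy w z) / 2"
definition dzbar :: "(complex \<Rightarrow> complex) \<Rightarrow> complex \<Rightarrow> complex" where
  "dzbar w z = (dx w z + \<i> * dy w z) / 2"

definition harmonic_on :: "complex set \<Rightarrow> (complex \<Rightarrow> complex) \<Rightarrow> bool" where
  "harmonic_on S w \<longleftrightarrow> open S \<and>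
     (\<forall>z\<in>S. w differentiable (at z) \<and> dx w differentiable (at z) \<and> dy w differentiable (at z)) \<and>
     continuous_on S (dx (dx w)) \<and> continuous_on S (dy (dx w)) \<and>
     continuous_on S (dx (dy w)) \<and> continuous_on S (dy (dy w)) \<and>
     (\<forall>z\<in>S. dx (dx w) z + dy (dy w) z = 0)"

definition quasiregular_on :: "complex set \<Rightarrow> (complex \<Rightarrow> complex) \<Rightarrow> bool" where
  "quasiregular_on S w \<longleftrightarrow> (\<exists>K\<ge>1. \<forall>z\<in>S.
     (cmod (dz w z) + cmod (dzbar w z))^2 \<le> K * ((cmod (dz w z))^2 - (cmod (dzbar w z))^2))"

end

theory Submission
  imports Defs "HOL-Complex_Analysis.Complex_Analysis"
begin


lemma hvd_line:
  assumes S: "open S" and f: "f holomorphic_on S" and z: "z \<in> S"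
  shows "((\<lambda>s::real. f (z + c * of_real s)) has_vector_derivative (c * deriv f z)) (at 0)"
proof -
  have l: "((\<lambda>s::real. z + c * of_real s) has_vector_derivative c) (at 0)"
    by (auto intro!: derivative_eq_intros)
  have d: "(f has_field_derivative deriv f z) (at ((\<lambda>s::real. z + c * of_real s) 0))"
    using holomorphic_derivI[OF f S z] by simp
  from field_vector_diff_chain_at[OF l d] show ?thesis by (simp add: o_def)
qed

lemma dxdy_hol:
  assumes S: "open S" and f: "f holomorphic_on S" and g: "g holomorphic_on S"
  and w: "\<And>x. x \<in> S \<Longrightarrow> w x = f x + cnj (g x)" and z: "z \<in> S"
  shows "dx w z = deriv f z + cnj (deriv g z)"
    and "dy w z = \<i> * deriv f z + cnj (\<i> * deriv g z)"
proof -
  have key: "((\<lambda>s::real. w (z + c * of_real s)) has_vector_derivative (c * deriv f z + cnj (c * deriv g z))) (at 0)" for c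
  proof -
    have "((\<lambda>s::real. f (z + c * of_real s) + cnj (g (z + c * of_real s))) has_vector_derivative (c * deriv f z + cnj (c * deriv g z))) (at 0)"
      by (intro has_vector_derivative_add has_vector_derivative_cnj hvd_line[OF S f z] hvd_line[OF S g z])
    moreover have "open {s::real. z + c * of_real s \<in> S}"
      by (intro open_vimage[unfolded vimage_def, OF S] continuous_intros)
    moreover have "(0::real) \<in> {s::real. z + c * of_real s \<in> S}" using z by simp
    ultimately show ?thesis
      by (rule has_vector_derivative_transform_within_open) (auto simp: w)
  qed
  show "dx w z = deriv f z + cnj (deriv g z)"
    unfolding dx_def using vector_derivative_at[OF key[of 1]] by simp
  show "dy w z = \<i> * deriv f z + cnj (\<i> * deriv g z)"
    unfolding dy_def using vector_derivative_at[OF key[of \<i>]] by simp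
qed

lemma diff_hol:
  assumes S: "open S" and f: "f holomorphic_on S" and g: "g holomorphic_on S"
  and w: "\<And>x. x \<in> S \<Longrightarrow> w x = f x + cnj (g x)" and z: "z \<in> S"
  shows "w differentiable (at z)"
proof -
  have fd: "f field_differentiable (at z)" "g field_differentiable (at z)"
    using holomorphic_on_imp_differentiable_at[OF _ S] f g z by auto
  have c: "(\<lambda>x. cnj (g x)) differentiable (at z)"
    using differentiable_compose[of cnj, OF bounded_linear_imp_differentiable[OF bounded_linear_cnj] field_differentiable_imp_differentiable[OF fd(2)]]
    by (simp add: o_def)
  have "(\<lambda>x. f x + cnj (g x)) differentiable (at z)"
    using differentiable_add[OF field_differentiable_imp_differentiable[OF fd(1)] c] .
  obtain d where d: "d > 0" "ball z d \<subseteq> S" using openE[OF S z] by metis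
  show ?thesis
  proof (rule differentiable_transform_within[OF _ d(1)])
    show "(\<lambda>x. f x + cnj (g x)) differentiable at z" by fact
    show "z \<in> UNIV" by simp
    fix x' assume "dist x' z < d"
    then have "x' \<in> S" using d(2) by (auto simp: dist_commute)
    then show "f x' + cnj (g x') = w x'" using w by simp
  qed
qed

lemma harmonic_hol:
  assumes S: "open S" and f: "f holomorphic_on S" and g: "g holomorphic_on S"
  and w: "\<And>x. x \<in> S \<Longrightarrow> w x = f x + cnj (g x)"
  shows "harmonic_on S w"
proof -
  have f1: "deriv f holomorphic_on S" "deriv g holomorphic_on S"
    using holomorphic_deriv[OF f S] holomorphic_deriv[OF g S] by auto
  have f2: "deriv (deriv f) holomorphic_on S" "deriv (deriv g) holomorphic_on S"
    using holomorphic_deriv[OF f1(1) S] holomorphic_deriv[OF f1(2) S] by auto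
  have f3: "(\<lambda>z. \<i> * deriv f z) holomorphic_on S" "(\<lambda>z. \<i> * deriv g z) holomorphic_on S"
    using holomorphic_on_mult[OF holomorphic_on_const f1(1)] holomorphic_on_mult[OF holomorphic_on_const f1(2)] by auto
  have dxw: "\<And>x. x \<in> S \<Longrightarrow> dx w x = deriv f x + cnj (deriv g x)"
   and dyw: "\<And>x. x \<in> S \<Longrightarrow> dy w x = \<i> * deriv f x + cnj (\<i> * deriv g x)"
    using dxdy_hol[OF S f g w] by simp_all
  have dm: "deriv (\<lambda>z. \<i> * deriv f z) x = \<i> * deriv (deriv f) x"
           "deriv (\<lambda>z. \<i> * deriv g z) x = \<i> * deriv (deriv g) x" if "x \<in> S" for x
    using that holomorphic_on_imp_differentiable_at[OF f1(1) S] holomorphic_on_imp_differentiable_at[OF f1(2) S]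
    by (simp_all add: deriv_cmult)
  have dxx: "\<And>x. x \<in> S \<Longrightarrow> dx (dx w) x = deriv (deriv f) x + cnj (deriv (deriv g) x)"
   and dyx: "\<And>x. x \<in> S \<Longrightarrow> dy (dx w) x = \<i> * deriv (deriv f) x + cnj (\<i> * deriv (deriv g) x)"
    using dxdy_hol[OF S f1 dxw] by simp_all
  have dxy: "\<And>x. x \<in> S \<Longrightarrow> dx (dy w) x = \<i> * deriv (deriv f) x + cnj (\<i> * deriv (deriv g) x)"
   and dyy: "\<And>x. x \<in> S \<Longrightarrow> dy (dy w) x = \<i> * (\<i> * deriv (deriv f) x) + cnj (\<i> * (\<i> * deriv (deriv g) x))"
    using dxdy_hol[OF S f3 dyw] dm by simp_all
  have c2: "continuous_on S (deriv (deriv f))" "continuous_on S (deriv (deriv g))"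
    using f2 holomorphic_on_imp_continuous_on by auto
  have A: "\<forall>z\<in>S. w differentiable (at z) \<and> dx w differentiable (at z) \<and> dy w differentiable (at z)"
    using diff_hol[OF S f g w] diff_hol[OF S f1 dxw] diff_hol[OF S f3 dyw] by blast
  have B: "\<forall>z\<in>S. dx (dx w) z + dy (dy w) z = 0" using dxx dyy by simp
  have C1: "continuous_on S (dx (dx w))"
    by (rule continuous_on_eq[OF _ dxx[symmetric]]) (intro continuous_on_add continuous_on_cnj continuous_on_mult_left c2, assumption)
  have C2: "continuous_on S (dy (dx w))"
    by (rule continuous_on_eq[OF _ dyx[symmetric]]) (intro continuous_on_add continuous_on_cnj continuous_on_mult_left c2, assumption)
  have C3: "continuous_on S (dx (dy w))"
    by (rule continuous_on_eq[OF _ dxy[symmetric]]) (intro continuous_on_add continuous_on_cnj continuous_on_mult_left c2, assumption)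
  have C4: "continuous_on S (dy (dy w))"
    by (rule continuous_on_eq[OF _ dyy[symmetric]]) (intro continuous_on_add continuous_on_cnj continuous_on_mult_left c2, assumption)
  show ?thesis unfolding harmonic_on_def by (intro conjI S A B C1 C2 C3 C4)
qed


lemma kernel_alg:
  fixes z :: complex and t :: real
  assumes z: "norm z < 1"
  defines "q \<equiv> z * exp (-(\<i> * of_real t))"
  shows "1 / (1 - q) + cnj q / (1 - cnj q) = of_real (2 * pi * poisson_kernel (cmod z) (t - Arg z))"
proof -
  have nq: "norm q = norm z" unfolding q_def by (simp add: norm_mult)
  have q1: "1 - q \<noteq> 0" "1 - cnj q \<noteq> 0" using nq z
    by (metis complex_cnj_one complex_cnj_diff complex_cnj_zero_iff norm_one right_minus_eq order_less_irrefl)+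
  have zz: "z = of_real (cmod z) * cis (Arg z)"
  proof (cases "z = 0")
    case True then show ?thesis by simp
  next
    case False then show ?thesis using Arg_eq[OF False] by (simp add: cis_conv_exp)
  qed
  have qq: "q = of_real (cmod z) * cis (Arg z - t)"
    unfolding q_def by (subst zz) (simp add: cis_conv_exp exp_diff exp_minus field_simps flip: exp_add)
  have req: "Re q = cmod z * cos (t - Arg z)"
    by (simp add: qq cos_diff mult.commute)
  have prod: "(1 - q) * (1 - cnj q) = of_real (1 - 2 * cmod z * cos (t - Arg z) + (cmod z)^2)"
  proof -
    have "(1 - q) * (1 - cnj q) = 1 - (q + cnj q) + q * cnj q" by (simp add: algebra_simps)
    also have "\<dots> = 1 - of_real (2 * Re q) + of_real ((norm q)^2)"
      using complex_norm_square[of q] by (simp add: complex_add_cnj)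
    finally show ?thesis by (simp add: req nq)
  qed
  have "1 / (1 - q) + cnj q / (1 - cnj q) = (1 - q * cnj q) / ((1 - q) * (1 - cnj q))"
    using q1 by (simp add: field_simps)
  also have "\<dots> = of_real ((1 - (cmod z)^2) / (1 - 2 * cmod z * cos (t - Arg z) + (cmod z)^2))"
    by (simp add: prod complex_norm_square[symmetric] nq)
  finally show ?thesis unfolding poisson_kernel_def by simp
qed

definition acoef :: "(real \<Rightarrow> complex) \<Rightarrow> nat \<Rightarrow> complex" where
  "acoef f n = integral {0..2*pi} (\<lambda>t. exp (-(\<i> * of_real t)) ^ n * f t) / (2*pi)"
definition bcoef :: "(real \<Rightarrow> complex) \<Rightarrow> nat \<Rightarrow> complex" where
  "bcoef f n = integral {0..2*pi} (\<lambda>t. exp (\<i> * of_real t) ^ n * f t) / (2*pi)"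

lemma coef_bound:
  assumes f: "continuous_on {0..2*pi} f" and fb: "\<And>t. t\<in>{0..2*pi} \<Longrightarrow> norm (f t) \<le> 1"
  shows "norm (acoef f n) \<le> 1" "norm (bcoef f n) \<le> 1"
proof -
  have "norm (integral {0..2*pi} (\<lambda>t. exp (-(\<i> * of_real t)) ^ n * f t)) \<le> integral {0..2*pi} (\<lambda>t. 1::real)"
    by (rule integral_norm_bound_integral) (auto intro!: integrable_continuous_real integrable_continuous_interval continuous_intros f simp: norm_mult norm_power fb)
  then show "norm (acoef f n) \<le> 1" by (simp add: acoef_def norm_divide)
  have "norm (integral {0..2*pi} (\<lambda>t. exp (\<i> * of_real t) ^ n * f t)) \<le> integral {0..2*pi} (\<lambda>t. 1::real)"
    by (rule integral_norm_bound_integral) (auto intro!: integrable_continuous_real integrable_continuous_interval continuous_intros f simp: norm_mult norm_power fb)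
  then show "norm (bcoef f n) \<le> 1" by (simp add: bcoef_def norm_divide)
qed

lemma powser_bounded_summable:
  fixes c :: "nat \<Rightarrow> complex"
  assumes "\<And>n. norm (c n) \<le> 1" "norm z < 1"
  shows "summable (\<lambda>n. c n * z ^ n)"
proof (rule summable_comparison_test[where g="\<lambda>n. norm z ^ n"])
  show "\<exists>N. \<forall>n\<ge>N. norm (c n * z ^ n) \<le> norm z ^ n"
    using assms(1) by (auto simp: norm_mult norm_power intro!: mult_left_le_one_le)
  show "summable (\<lambda>n. norm z ^ n)" using assms(2) by (simp add: summable_geometric)
qed

lemma poisson_series:
  assumes f: "continuous_on {0..2*pi} f" and fb: "\<And>t. t\<in>{0..2*pi} \<Longrightarrow> norm (f t) \<le> 1"
    and z: "norm z < 1"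
  shows "integral {0..2*pi} (\<lambda>t. of_real (poisson_kernel (cmod z) (t - Arg z)) * f t)
       = (\<Sum>n. acoef f n * z^n) + (\<Sum>n. bcoef f (Suc n) * cnj z ^ Suc n)"
proof -
  define q where "q t = z * exp (-(\<i> * of_real t))" for t :: real
  define u where "u n t = ((q t)^n + cnj (q t) ^ Suc n) / (2*pi) * f t" for n t
  have nq: "norm (q t) = norm z" for t unfolding q_def by (simp add: norm_mult)
  have usum: "(\<lambda>n. u n t) sums (of_real (poisson_kernel (cmod z) (t - Arg z)) * f t)" for t
  proof -
    have g1: "(\<lambda>n. (q t)^n) sums (1 / (1 - q t))" using geometric_sums[of "q t"] nq z by simp
    have g2: "(\<lambda>n. cnj (q t) ^ Suc n) sums (cnj (q t) * (1 / (1 - cnj (q t))))"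
      using sums_mult[OF geometric_sums[of "cnj (q t)"], of "cnj (q t)"] nq z by simp
    have "(\<lambda>n. ((q t)^n + cnj (q t) ^ Suc n) / (2*pi) * f t) sums ((1 / (1 - q t) + cnj (q t) / (1 - cnj (q t))) / (2*pi) * f t)"
      by (intro sums_mult2 sums_divide) (use sums_add[OF g1 g2] in simp)
    also have "(1 / (1 - q t) + cnj (q t) / (1 - cnj (q t))) = of_real (2 * pi * poisson_kernel (cmod z) (t - Arg z))"
      unfolding q_def by (rule kernel_alg[OF z])
    finally show ?thesis unfolding u_def by simp
  qed
  have ubound: "norm (u n t) \<le> norm z ^ n / pi" if "t \<in> {0..2*pi}" for n t
  proof -
    have "norm ((q t)^n + cnj (q t) ^ Suc n) \<le> norm z ^ n + norm z ^ Suc n"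
      by (rule order_trans[OF norm_triangle_ineq]) (simp add: norm_power norm_mult nq)
    also have "\<dots> \<le> 2 * norm z ^ n" using z by (simp add: mult_left_le_one_le)
    finally have a: "norm ((q t)^n + cnj (q t) ^ Suc n) \<le> 2 * norm z ^ n" .
    have "norm (u n t) = norm ((q t)^n + cnj (q t) ^ Suc n) / (2*pi) * norm (f t)"
      unfolding u_def by (simp add: norm_mult norm_divide)
    also have "\<dots> \<le> (2 * norm z ^ n) / (2*pi) * 1"
      by (intro mult_mono divide_right_mono a fb that) auto
    finally show ?thesis by simp
  qed
  have ul: "uniform_limit {0..2*pi} (\<lambda>N t. \<Sum>n<N. u n t) (\<lambda>t. \<Sum>n. u n t) sequentially"
    by (rule Weierstrass_m_test[OF ubound]) (use z in \<open>auto intro!: summable_divide summable_geometric\<close>)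
  have qc: "continuous_on {0..2*pi} q" unfolding q_def by (intro continuous_intros)
  have uc: "continuous_on {0..2*pi} (\<lambda>t. \<Sum>n<N. u n t)" for N
    unfolding u_def by (intro continuous_intros qc f) auto
  obtain I J where I: "\<And>N. ((\<lambda>t. \<Sum>n<N. u n t) has_integral I N) {0..2*pi}"
    and J: "((\<lambda>t. \<Sum>n. u n t) has_integral J) {0..2*pi}" and IJ: "I \<longlonglongrightarrow> J"
    using uniform_limit_integral[OF ul uc] by auto
  define c where "c n = acoef f n * z^n + bcoef f (Suc n) * cnj z ^ Suc n" for n
  have ui: "(u n has_integral c n) {0..2*pi}" for n
  proof -
    have e: "u n t = z^n / (2*pi) * (exp (-(\<i> * of_real t)) ^ n * f t) + cnj z ^ Suc n / (2*pi) * (exp (\<i> * of_real t) ^ Suc n * f t)" for t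
      unfolding u_def q_def by (simp add: power_mult_distrib exp_cnj field_simps)
    have i1: "((\<lambda>t. exp (-(\<i> * of_real t)) ^ n * f t) has_integral (2*pi) * acoef f n) {0..2*pi}"
      unfolding acoef_def by (simp, rule integrable_integral, intro integrable_continuous_interval continuous_intros f)
    have i2: "((\<lambda>t. exp (\<i> * of_real t) ^ Suc n * f t) has_integral (2*pi) * bcoef f (Suc n)) {0..2*pi}"
      unfolding bcoef_def by (simp, rule integrable_integral, intro integrable_continuous_interval continuous_intros f)
    have "((\<lambda>t. z^n / (2*pi) * (exp (-(\<i> * of_real t)) ^ n * f t) + cnj z ^ Suc n / (2*pi) * (exp (\<i> * of_real t) ^ Suc n * f t))
       has_integral (z^n / (2*pi) * ((2*pi) * acoef f n) + cnj z ^ Suc n / (2*pi) * ((2*pi) * bcoef f (Suc n)))) {0..2*pi}"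
      by (intro has_integral_add has_integral_mult_right i1 i2)
    then show ?thesis unfolding c_def e[abs_def] by (simp add: field_simps)
  qed
  have IN: "I N = (\<Sum>n<N. c n)" for N
  proof -
    have "((\<lambda>t. \<Sum>n<N. u n t) has_integral (\<Sum>n<N. c n)) {0..2*pi}"
      by (rule has_integral_sum) (use ui in auto)
    then show ?thesis using has_integral_unique[OF I[of N]] by simp
  qed
  have sa: "summable (\<lambda>n. acoef f n * z^n)"
    by (rule powser_bounded_summable[OF coef_bound(1)[OF f fb] z])
  have sb0: "summable (\<lambda>n. bcoef f (Suc n) * cnj z ^ n)"
  proof (rule powser_bounded_summable)
    show "norm (bcoef f (Suc n)) \<le> 1" for n using coef_bound(2)[OF f fb] .
    show "norm (cnj z) < 1" using z by simp
  qed
  have sb: "summable (\<lambda>n. bcoef f (Suc n) * cnj z ^ Suc n)"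
  proof -
    have eq: "(\<lambda>n. bcoef f (Suc n) * cnj z ^ Suc n) = (\<lambda>n. cnj z * (bcoef f (Suc n) * cnj z ^ n))"
      by (rule ext) (simp only: power_Suc mult.left_commute)
    show ?thesis unfolding eq by (rule summable_mult[OF sb0])
  qed
  have "c sums ((\<Sum>n. acoef f n * z^n) + (\<Sum>n. bcoef f (Suc n) * cnj z ^ Suc n))"
    unfolding c_def by (intro sums_add summable_sums sa sb)
  then have "I \<longlonglongrightarrow> (\<Sum>n. acoef f n * z^n) + (\<Sum>n. bcoef f (Suc n) * cnj z ^ Suc n)"
    unfolding sums_def IN .
  then have "J = (\<Sum>n. acoef f n * z^n) + (\<Sum>n. bcoef f (Suc n) * cnj z ^ Suc n)"
    using LIMSEQ_unique[OF IJ] by blast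
  moreover have "integral {0..2*pi} (\<lambda>t. of_real (poisson_kernel (cmod z) (t - Arg z)) * f t) = J"
  proof -
    have "(\<lambda>t. \<Sum>n. u n t) = (\<lambda>t. of_real (poisson_kernel (cmod z) (t - Arg z)) * f t)"
      using usum sums_unique by (intro ext) (rule sym, blast)
    then show ?thesis using integral_unique[OF J] by simp
  qed
  ultimately show ?thesis by simp
qed


definition aa :: real where "aa = 1 - 1/pi"
definition bb :: real where "bb = 1 + 1/pi"
definition psi :: "real \<Rightarrow> real" where "psi t = 1 + aa * t + (2/pi) * max 0 (t - pi)"
definition EE :: "real \<Rightarrow> complex" where "EE t = exp (\<i> * of_real (psi t))"

lemma psi_le: "t \<le> pi \<Longrightarrow> psi t = 1 + aa * t"
  by (simp add: psi_def)
lemma psi_ge: "t \<ge> pi \<Longrightarrow> psi t = bb * t - 1"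
  by (simp add: psi_def aa_def bb_def field_simps)

lemma phi_eq: assumes "-pi \<le> x" "x < pi" shows "phi x = phi0 x"
proof -
  have "\<lfloor>(x + pi) / (2*pi)\<rfloor> = 0"
    using assms pi_gt_zero by (subst floor_eq_iff) (auto simp: field_simps)
  then show ?thesis by (simp add: phi_def)
qed

lemma phi_pi: "phi pi = pi"
proof -
  have "\<lfloor>(pi + pi) / (2*pi)\<rfloor> = 1" by simp
  then show ?thesis by (simp add: phi_def phi0_def field_simps)
qed

lemma exp_i_2pi: "exp (\<i> * of_real (x + 2*pi)) = exp (\<i> * of_real x)"
proof -
  have "\<i> * of_real (x + 2*pi) = \<i> * of_real x + 2 * of_real pi * \<i>" by (simp add: algebra_simps)
  then show ?thesis by (simp add: exp_add exp_two_pi_i)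
qed

lemma FbE: assumes t: "0 \<le> t" "t \<le> 2*pi" shows "Fb (exp (\<i> * of_real t)) = EE t"
proof -
  consider "t < pi" | "t = pi" | "pi < t" "t < 2*pi" | "t = 2*pi" using t by linarith
  then show ?thesis
  proof cases
    case 1
    have "Arg (exp (\<i> * of_real t)) = t" using 1 t pi_gt_zero by (subst Arg_exp) auto
    moreover have "phi t = psi t" using 1 t by (simp add: phi_eq phi0_def psi_le aa_def)
    ultimately show ?thesis by (simp add: Fb_def EE_def)
  next
    case 2
    have "Arg (exp (\<i> * of_real t)) = t" using 2 pi_gt_zero by (subst Arg_exp) auto
    moreover have "phi t = psi t" using 2 by (simp add: phi_pi psi_le aa_def field_simps)
    ultimately show ?thesis by (simp add: Fb_def EE_def)
  next
    case 3
    have e: "exp (\<i> * of_real t) = exp (\<i> * of_real (t - 2*pi))"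
      using exp_i_2pi[of "t - 2*pi"] by simp
    have "Arg (exp (\<i> * of_real t)) = t - 2*pi" unfolding e using 3 by (subst Arg_exp) auto
    moreover have "phi (t - 2*pi) = psi t - 2*pi" using 3
      by (simp add: phi_eq phi0_def psi_ge bb_def field_simps)
    ultimately show ?thesis
      using exp_i_2pi[of "psi t - 2*pi"] by (simp add: Fb_def EE_def)
  next
    case 4
    have e: "exp (\<i> * of_real t) = 1" using 4 exp_two_pi_i by (simp add: mult.commute)
    have "phi 0 = 1" by (simp add: phi_eq phi0_def)
    moreover have "psi t = 1 + 2*pi" using 4 by (simp add: psi_ge bb_def field_simps)
    ultimately show ?thesis
      using exp_i_2pi[of 1] e by (simp add: Fb_def EE_def)
  qed
qed

lemma psi_lip: "\<bar>psi y - psi x\<bar> \<le> bb * \<bar>y - x\<bar>"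
proof -
  have m: "\<bar>max 0 (y - pi) - max 0 (x - pi)\<bar> \<le> \<bar>y - x\<bar>" by (simp add: max_def)
  have a: "aa \<ge> 0" unfolding aa_def using pi_gt3 by (simp add: field_simps)
  have "\<bar>psi y - psi x\<bar> = \<bar>aa * (y - x) + (2/pi) * (max 0 (y - pi) - max 0 (x - pi))\<bar>"
    by (simp add: psi_def algebra_simps)
  also have "\<dots> \<le> \<bar>aa * (y - x)\<bar> + \<bar>(2/pi) * (max 0 (y - pi) - max 0 (x - pi))\<bar>"
    by (rule abs_triangle_ineq)
  also have "\<dots> = aa * \<bar>y - x\<bar> + (2/pi) * \<bar>max 0 (y - pi) - max 0 (x - pi)\<bar>"
    using a by (simp only: abs_mult abs_of_nonneg pi_gt_zero less_imp_le divide_nonneg_pos zero_le_numeral)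
  also have "\<dots> \<le> aa * \<bar>y - x\<bar> + (2/pi) * \<bar>y - x\<bar>"
    by (intro add_left_mono mult_left_mono m) simp
  also have "\<dots> = bb * \<bar>y - x\<bar>" by (simp add: aa_def bb_def field_simps)
  finally show ?thesis .
qed

lemma exp_i_lip: "norm (exp (\<i> * of_real u) - exp (\<i> * of_real v)) \<le> \<bar>u - v\<bar>"
proof -
  have "norm ((\<lambda>z. exp (\<i> * z)) (of_real u) - (\<lambda>z. exp (\<i> * z)) (of_real v)) \<le> 1 * norm (of_real u - (of_real v :: complex))"
  proof (rule field_differentiable_bound[OF convex_Reals])
    show "((\<lambda>z. exp (\<i> * z)) has_field_derivative \<i> * exp (\<i> * z)) (at z within \<real>)" for z
      by (auto intro!: derivative_eq_intros)
    show "norm (\<i> * exp (\<i> * z)) \<le> 1" if "z \<in> \<real>" for z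
      using that by (auto simp: norm_mult elim!: Reals_cases)
  qed auto
  then show ?thesis by (simp flip: of_real_diff)
qed

lemma EE_lip: "norm (EE y - EE x) \<le> bb * \<bar>y - x\<bar>"
  unfolding EE_def using exp_i_lip[of "psi y" "psi x"] psi_lip[of y x] by linarith

lemma EE_norm: "norm (EE t) = 1" by (simp add: EE_def)

lemma EE_cont: "continuous_on A EE"
  unfolding EE_def psi_def by (intro continuous_intros)


lemma hvd_exp_lin: "((\<lambda>t::real. exp (\<i> * of_real (c + d*t))) has_vector_derivative (\<i> * of_real d * exp (\<i> * of_real (c + d*t)))) (at t within S)"
proof -
  have l: "((\<lambda>t::real. \<i> * of_real (c + d*t)) has_vector_derivative (\<i> * of_real d)) (at t within S)"
    by (auto intro!: derivative_eq_intros simp: has_vector_derivative_def has_derivative_of_real fun_eq_iff scaleR_conv_of_real)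
  have "((exp \<circ> (\<lambda>t::real. \<i> * of_real (c + d*t))) has_vector_derivative (\<i> * of_real d * exp (\<i> * of_real (c + d*t)))) (at t within S)"
    by (rule field_vector_diff_chain_within[OF l]) (auto intro!: derivative_eq_intros)
  then show ?thesis by (simp add: o_def)
qed

lemma ftc_exp:
  assumes d: "d \<noteq> 0" and ab: "\<alpha> \<le> \<beta>"
  shows "((\<lambda>t. exp (\<i> * of_real (c + d*t))) has_integral
           ((exp (\<i> * of_real (c + d*\<beta>)) - exp (\<i> * of_real (c + d*\<alpha>))) / (\<i> * of_real d))) {\<alpha>..\<beta>}"
proof -
  define k where "k = inverse (\<i> * of_real d)"
  have k: "\<i> * of_real d * k = 1" unfolding k_def by (rule right_inverse) (use d in simp)
  have "((\<lambda>t. exp (\<i> * of_real (c + d*t))) has_integral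
       ((\<lambda>t. exp (\<i> * of_real (c + d*t)) * k) \<beta> - (\<lambda>t. exp (\<i> * of_real (c + d*t)) * k) \<alpha>)) {\<alpha>..\<beta>}"
  proof (rule fundamental_theorem_of_calculus[OF ab])
    fix x assume "x \<in> {\<alpha>..\<beta>}"
    have eq: "(\<i> * of_real d * exp (\<i> * of_real (c + d*x))) * k = exp (\<i> * of_real (c + d*x))"
      by (metis k mult.commute mult.left_commute mult_1_right)
    show "((\<lambda>t. exp (\<i> * of_real (c + d*t)) * k) has_vector_derivative exp (\<i> * of_real (c + d*x))) (at x within {\<alpha>..\<beta>})"
      using has_vector_derivative_mult_left[OF hvd_exp_lin[of c d x "{\<alpha>..\<beta>}"], of k] unfolding eq .
  qed
  moreover have "(\<lambda>t. exp (\<i> * of_real (c + d*t)) * k) \<beta> - (\<lambda>t. exp (\<i> * of_real (c + d*t)) * k) \<alpha>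
      = (exp (\<i> * of_real (c + d*\<beta>)) - exp (\<i> * of_real (c + d*\<alpha>))) / (\<i> * of_real d)"
    unfolding k_def divide_inverse by (simp only: left_diff_distrib)
  ultimately show ?thesis by simp
qed

lemma aabb: "0 < aa" "aa < 1" "1 < bb" "bb < 2" "bb - aa = 2/pi" "aa * pi = pi - 1" "bb * pi = pi + 1"
  using pi_gt3 by (auto simp: aa_def bb_def field_simps)

lemma exp_i_pi_add: "exp (\<i> * of_real (pi + y)) = - exp (\<i> * of_real y)"
proof -
  have "\<i> * of_real (pi + y) = of_real pi * \<i> + \<i> * of_real y" by (simp add: algebra_simps)
  then show ?thesis by (simp add: exp_add exp_pi_i)
qed

lemma coef_alg:
  fixes X :: complex
  assumes na: "\<nu> \<noteq> aa" and nb: "\<nu> \<noteq> bb"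
  shows "(- X) / (\<i> * of_real (aa - \<nu>)) + X / (\<i> * of_real (bb - \<nu>))
       = (2*pi) * (\<i> * X / of_real (pi^2 * ((\<nu> - aa) * (\<nu> - bb))))"
proof -
  have nz: "aa - \<nu> \<noteq> 0" "bb - \<nu> \<noteq> 0" "\<nu> - aa \<noteq> 0" "\<nu> - bb \<noteq> 0" using na nb by auto
  have r0: "1/(bb - \<nu>) - 1/(aa - \<nu>) = (aa - bb) / ((\<nu> - aa) * (\<nu> - bb))"
    using nz by (simp add: field_simps)
  have ab: "aa - bb = -(2/pi)" using aabb(5) by simp
  have r: "1/(bb - \<nu>) - 1/(aa - \<nu>) = -(2/pi) / ((\<nu> - aa) * (\<nu> - bb))"
    using r0 unfolding ab .
  have gen: "(- X) / (\<i> * A) + X / (\<i> * B) = - \<i> * X * (1/B - 1/A)" if "A \<noteq> 0" "B \<noteq> 0" for A B :: complex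
    using that by (simp add: field_simps)
  have "(- X) / (\<i> * of_real (aa - \<nu>)) + X / (\<i> * of_real (bb - \<nu>))
      = - \<i> * X * (1/of_real (bb - \<nu>) - 1/of_real (aa - \<nu>))"
    by (rule gen) (use nz in auto)
  also have "\<dots> = - \<i> * X * of_real (1/(bb - \<nu>) - 1/(aa - \<nu>))" by simp
  also have "\<dots> = - \<i> * X * of_real (-(2/pi) / ((\<nu> - aa) * (\<nu> - bb)))" by (simp only: r)
  also have "\<dots> = (2*pi) * (\<i> * X / of_real (pi^2 * ((\<nu> - aa) * (\<nu> - bb))))"
  proof -
    have gen2: "- \<i> * X * (-(2/P) / D) = (2*P) * (\<i> * X / (P^2 * D))" if "P \<noteq> 0" "D \<noteq> 0" for P D :: complex
      using that by (simp add: field_simps power2_eq_square)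
    have "(of_real ((\<nu> - aa) * (\<nu> - bb)) :: complex) \<noteq> 0" using nz by simp
    from gen2[OF _ this, of "of_real pi"] show ?thesis by simp
  qed
  finally show ?thesis .
qed

lemma coef_int:
  assumes s1: "exp (\<i> * of_real (-(\<nu>*pi))) = \<sigma>" and s2: "exp (\<i> * of_real (-(\<nu>*(2*pi)))) = 1"
    and na: "\<nu> \<noteq> aa" and nb: "\<nu> \<noteq> bb"
  shows "((\<lambda>t. exp (\<i> * of_real (psi t - \<nu>*t))) has_integral
           (2*pi) * (\<i> * (exp \<i> + \<sigma>) / of_real (pi^2 * ((\<nu> - aa) * (\<nu> - bb))))) {0..2*pi}"
proof -
  have p1: "((\<lambda>t. exp (\<i> * of_real (1 + (aa - \<nu>)*t))) has_integral
     ((exp (\<i> * of_real (1 + (aa - \<nu>)*pi)) - exp (\<i> * of_real (1 + (aa - \<nu>)*0))) / (\<i> * of_real (aa - \<nu>)))) {0..pi}"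
    by (rule ftc_exp) (use na in auto)
  have e1: "exp (\<i> * of_real (1 + (aa - \<nu>)*pi)) = - \<sigma>"
  proof -
    have "1 + (aa - \<nu>)*pi = pi + (-(\<nu>*pi))" using aabb(6) by (simp add: algebra_simps)
    then show ?thesis using exp_i_pi_add[of "-(\<nu>*pi)"] s1 by simp
  qed
  have e0: "exp (\<i> * of_real (1 + (aa - \<nu>)*0)) = exp \<i>" by simp
  have p2: "((\<lambda>t. exp (\<i> * of_real (-1 + (bb - \<nu>)*t))) has_integral
     ((exp (\<i> * of_real (-1 + (bb - \<nu>)*(2*pi))) - exp (\<i> * of_real (-1 + (bb - \<nu>)*pi))) / (\<i> * of_real (bb - \<nu>)))) {pi..2*pi}"
    by (rule ftc_exp) (use nb in auto)
  have e2: "exp (\<i> * of_real (-1 + (bb - \<nu>)*(2*pi))) = exp \<i>"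
  proof -
    have r: "-1 + (bb - \<nu>)*(2*pi) = (1 + (-(\<nu>*(2*pi)))) + 2*pi" using aabb(7) by (simp add: algebra_simps)
    have "exp (\<i> * of_real (-1 + (bb - \<nu>)*(2*pi))) = exp (\<i> * of_real (1 + (-(\<nu>*(2*pi)))))"
      unfolding r by (rule exp_i_2pi)
    also have "\<dots> = exp \<i> * exp (\<i> * of_real (-(\<nu>*(2*pi))))"
    proof -
      have "\<i> * of_real (1 + (-(\<nu>*(2*pi)))) = \<i> + \<i> * of_real (-(\<nu>*(2*pi)))"
        by (simp only: of_real_add of_real_1 distrib_left mult_1_right)
      then show ?thesis by (simp only: exp_add)
    qed
    finally show ?thesis using s2 by simp
  qed
  have e3: "exp (\<i> * of_real (-1 + (bb - \<nu>)*pi)) = - \<sigma>"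
  proof -
    have "-1 + (bb - \<nu>)*pi = pi + (-(\<nu>*pi))" using aabb(7) by (simp add: algebra_simps)
    then show ?thesis using exp_i_pi_add[of "-(\<nu>*pi)"] s1 by simp
  qed
  have q1: "((\<lambda>t. exp (\<i> * of_real (psi t - \<nu>*t))) has_integral
     ((- \<sigma> - exp \<i>) / (\<i> * of_real (aa - \<nu>)))) {0..pi}"
    using p1 unfolding e1 e0
    by (rule has_integral_eq[rotated]) (simp add: psi_le algebra_simps)
  have q2: "((\<lambda>t. exp (\<i> * of_real (psi t - \<nu>*t))) has_integral
     ((exp \<i> - - \<sigma>) / (\<i> * of_real (bb - \<nu>)))) {pi..2*pi}"
    using p2 unfolding e2 e3
    by (rule has_integral_eq[rotated]) (simp add: psi_ge algebra_simps)
  have "((\<lambda>t. exp (\<i> * of_real (psi t - \<nu>*t))) has_integral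
     ((- \<sigma> - exp \<i>) / (\<i> * of_real (aa - \<nu>)) + (exp \<i> - - \<sigma>) / (\<i> * of_real (bb - \<nu>)))) {0..2*pi}"
    by (rule has_integral_combine[OF _ _ q1 q2]) auto
  moreover have "(- \<sigma> - exp \<i>) / (\<i> * of_real (aa - \<nu>)) + (exp \<i> - - \<sigma>) / (\<i> * of_real (bb - \<nu>))
     = (2*pi) * (\<i> * (exp \<i> + \<sigma>) / of_real (pi^2 * ((\<nu> - aa) * (\<nu> - bb))))"
    using coef_alg[OF na nb, of "exp \<i> + \<sigma>"] by (simp add: algebra_simps)
  ultimately show ?thesis by simp
qed

lemma nat_ne_aa: "real n \<noteq> aa" and nat_ne_bb: "real n \<noteq> bb"
proof -
  have "n = 0 \<or> n = 1 \<or> n \<ge> 2" by arith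
  then show "real n \<noteq> aa" "real n \<noteq> bb" using aabb(1-4) by auto
qed

lemma exp_n_pi: "exp (\<i> * of_real (real n * pi)) = (-1)^n" "exp (\<i> * of_real (-(real n * pi))) = (-1)^n"
  "exp (\<i> * of_real (real n * (2*pi))) = 1" "exp (\<i> * of_real (-(real n * (2*pi)))) = 1"
proof -
  have a: "\<i> * of_real (real n * pi) = of_nat n * (of_real pi * \<i>)" by simp
  have b: "\<i> * of_real (-(real n * pi)) = of_nat n * (-(of_real pi * \<i>))" by simp
  have c: "\<i> * of_real (real n * (2*pi)) = of_nat n * (2 * of_real pi * \<i>)" by simp
  have d: "\<i> * of_real (-(real n * (2*pi))) = of_nat n * (-(2 * of_real pi * \<i>))" by simp
  show "exp (\<i> * of_real (real n * pi)) = (-1)^n" unfolding a exp_of_nat_mult exp_pi_i ..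
  show "exp (\<i> * of_real (-(real n * pi))) = (-1)^n" unfolding b exp_of_nat_mult exp_minus exp_pi_i by simp
  show "exp (\<i> * of_real (real n * (2*pi))) = 1" unfolding c exp_of_nat_mult exp_two_pi_i by simp
  show "exp (\<i> * of_real (-(real n * (2*pi)))) = 1" unfolding d exp_of_nat_mult exp_minus exp_two_pi_i by simp
qed

lemma acoef_EE: "acoef EE n = \<i> * (exp \<i> + (-1)^n) / of_real (pi^2 * ((real n - aa) * (real n - bb)))"
proof -
  have e: "exp (-(\<i> * of_real t)) ^ n * EE t = exp (\<i> * of_real (psi t - real n * t))" for t
  proof -
    have "exp (-(\<i> * of_real t)) ^ n * EE t = exp (of_nat n * (-(\<i> * of_real t)) + \<i> * of_real (psi t))"
      unfolding EE_def exp_add exp_of_nat_mult ..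
    also have "of_nat n * (-(\<i> * of_real t)) + \<i> * of_real (psi t) = \<i> * of_real (psi t - real n * t)"
      by (simp add: algebra_simps)
    finally show ?thesis .
  qed
  have "((\<lambda>t. exp (-(\<i> * of_real t)) ^ n * EE t) has_integral
     (2*pi) * (\<i> * (exp \<i> + (-1)^n) / of_real (pi^2 * ((real n - aa) * (real n - bb))))) {0..2*pi}"
    unfolding e by (rule coef_int[OF exp_n_pi(2) exp_n_pi(4) nat_ne_aa nat_ne_bb])
  then show ?thesis unfolding acoef_def by (simp add: integral_unique)
qed

lemma bcoef_EE: "bcoef EE n = \<i> * (exp \<i> + (-1)^n) / of_real (pi^2 * ((real n + aa) * (real n + bb)))"
proof -
  have e: "exp (\<i> * of_real t) ^ n * EE t = exp (\<i> * of_real (psi t - (- real n) * t))" for t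
  proof -
    have "exp (\<i> * of_real t) ^ n * EE t = exp (of_nat n * (\<i> * of_real t) + \<i> * of_real (psi t))"
      unfolding EE_def exp_add exp_of_nat_mult ..
    also have "of_nat n * (\<i> * of_real t) + \<i> * of_real (psi t) = \<i> * of_real (psi t - (- real n) * t)"
      by (simp add: algebra_simps)
    finally show ?thesis .
  qed
  have s1: "exp (\<i> * of_real (-((- real n)*pi))) = (-1)^n" using exp_n_pi(1) by simp
  have s2: "exp (\<i> * of_real (-((- real n)*(2*pi)))) = 1" using exp_n_pi(3) by simp
  have na: "- real n \<noteq> aa" "- real n \<noteq> bb" using aabb(1,3) by (auto simp: not_less)
  have "((\<lambda>t. exp (\<i> * of_real t) ^ n * EE t) has_integral
     (2*pi) * (\<i> * (exp \<i> + (-1)^n) / of_real (pi^2 * ((- real n - aa) * (- real n - bb))))) {0..2*pi}"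
    unfolding e by (rule coef_int[OF s1 s2 na])
  moreover have "(- real n - aa) * (- real n - bb) = (real n + aa) * (real n + bb)" by (simp add: algebra_simps)
  ultimately show ?thesis unfolding bcoef_def by (simp add: integral_unique)
qed


definition uu :: "real \<Rightarrow> real" where "uu m = m / ((m - aa) * (m - bb))"
definition vv :: "real \<Rightarrow> real" where "vv m = m / ((m + aa) * (m + bb))"

lemma pi_sq: "1 < pi*pi" using pi_gt3 by (intro less_1_mult) auto

lemma pp: "aa * bb = 1 - 1/pi^2" "0 < aa * bb" "aa * bb < 1" "aa + bb = 2"
proof -
  show 1: "aa * bb = 1 - 1/pi^2" by (simp add: aa_def bb_def field_simps power2_eq_square)
  show "0 < aa * bb" using aabb(1,3) by simp
  show "aa * bb < 1" unfolding 1 by simp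
  show "aa + bb = 2" by (simp add: aa_def bb_def)
qed

lemma dm: "(m - aa) * (m - bb) = m*m - 2*m + aa*bb" "(m + aa) * (m + bb) = m*m + 2*m + aa*bb"
proof -
  have "(m - aa) * (m - bb) = m*m - (aa+bb)*m + aa*bb" "(m + aa) * (m + bb) = m*m + (aa+bb)*m + aa*bb"
    by (simp_all add: algebra_simps)
  then show "(m - aa) * (m - bb) = m*m - 2*m + aa*bb" "(m + aa) * (m + bb) = m*m + 2*m + aa*bb"
    unfolding pp(4) by simp_all
qed

lemma u1: "uu 1 = -(pi^2)"
  by (simp add: uu_def aa_def bb_def field_simps power2_eq_square)

lemma dpos: assumes "m \<ge> 2" shows "(m - aa) * (m - bb) \<ge> m*m/6"
proof -
  have a: "m - aa \<ge> m/2" using assms aabb(2) by simp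
  have "1/pi < 1/3" using pi_gt3 by (simp add: field_simps)
  then have b: "m - bb \<ge> m/3" using assms unfolding bb_def by linarith
  have "m*m/6 = (m/2) * (m/3)" by simp
  also have "\<dots> \<le> (m - aa) * (m - bb)" using a b assms by (intro mult_mono) auto
  finally show ?thesis .
qed

lemma u_bounds: assumes "m \<ge> 2" shows "1/m \<le> uu m" "uu m \<le> 6/m" "0 \<le> uu m"
proof -
  have dp: "(m - aa) * (m - bb) > 0" using dpos[OF assms] assms by (smt (verit) mult_pos_pos divide_pos_pos)
  have "(m - aa) * (m - bb) \<le> m * m" using assms pp(3) dm(1)[of m] by linarith
  then show "1/m \<le> uu m" unfolding uu_def using dp assms
    by (simp add: field_simps)
  show "uu m \<le> 6/m" unfolding uu_def using dp assms dpos[OF assms]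
    by (simp add: field_simps)
  show "0 \<le> uu m" unfolding uu_def using dp assms by simp
qed

lemma u_mono: assumes "m \<ge> 2" shows "uu (m+1) \<le> uu m"
proof -
  have d0: "(m - aa) * (m - bb) > 0" using dpos[OF assms] assms by (smt (verit) mult_pos_pos divide_pos_pos)
  have d1: "(m + 1 - aa) * (m + 1 - bb) > 0" using dpos[of "m+1"] assms by (smt (verit) mult_pos_pos divide_pos_pos)
  have "(m+1) * ((m - aa) * (m - bb)) \<le> m * ((m + 1 - aa) * (m + 1 - bb))"
  proof -
    have "m * ((m + 1 - aa) * (m + 1 - bb)) - (m+1) * ((m - aa) * (m - bb)) = m*m + m - aa*bb"
      using pp(4) by (simp add: algebra_simps)
    moreover have "m*m \<ge> 0" by simp
    ultimately show ?thesis using assms pp(3) by linarith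
  qed
  then show ?thesis unfolding uu_def using d0 d1 by (simp add: divide_simps mult.commute)
qed

lemma v_pos: assumes "m \<ge> 1" shows "(m + aa) * (m + bb) \<ge> m * m" "(m + aa) * (m + bb) > 0"
proof -
  show "(m + aa) * (m + bb) \<ge> m * m" using assms aabb(1,3) by (intro mult_mono) auto
  then show "(m + aa) * (m + bb) > 0" using assms by (smt (verit) mult_pos_pos)
qed

lemma v_bounds: assumes "m \<ge> 1" shows "0 \<le> vv m" "vv m \<le> 1/m"
proof -
  show "0 \<le> vv m" unfolding vv_def using v_pos[OF assms] assms by simp
  show "vv m \<le> 1/m" unfolding vv_def using v_pos[OF assms] assms by (simp add: field_simps)
qed

lemma v_mono: assumes "m \<ge> 1" shows "vv (m+1) \<le> vv m"
proof -
  have d0: "(m + aa) * (m + bb) > 0" using v_pos[OF assms] by simp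
  have d1: "(m + 1 + aa) * (m + 1 + bb) > 0" using v_pos[of "m+1"] assms by simp
  have "(m+1) * ((m + aa) * (m + bb)) \<le> m * ((m + 1 + aa) * (m + 1 + bb))"
  proof -
    have "(m+1) * ((m + aa) * (m + bb)) - m * ((m + 1 + aa) * (m + 1 + bb)) = aa*bb - m*m - m"
      using pp(4) by (simp add: algebra_simps)
    moreover have "m*m \<ge> 1" using assms by (smt (verit) mult_le_cancel_left1)
    ultimately show ?thesis using assms pp(3) by linarith
  qed
  then show ?thesis unfolding vv_def using d0 d1 by (simp add: divide_simps mult.commute)
qed

lemma uv_diff: assumes "m \<ge> 2" shows "\<bar>uu m - vv m\<bar> \<le> 24 / (m*m)"
proof -
  have d1: "(m - aa) * (m - bb) \<ge> m*m/6" by (rule dpos[OF assms])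
  have d2: "(m + aa) * (m + bb) \<ge> m*m" using v_pos assms by simp
  have mm: "m*m > 0" using assms by simp
  have p1: "(m - aa) * (m - bb) > 0" using d1 mm by linarith
  have p2: "(m + aa) * (m + bb) > 0" using d2 mm by linarith
  have e: "uu m - vv m = 4*(m*m) / (((m - aa) * (m - bb)) * ((m + aa) * (m + bb)))"
  proof -
    have "(m + aa) * (m + bb) - (m - aa) * (m - bb) = 4*m" using dm[of m] by simp
    moreover have "x/A - x/B = x*(B - A)/(A*B)" if "A > 0" "B > 0" for x A B :: real
      using that by (simp add: field_simps)
    ultimately show ?thesis unfolding uu_def vv_def using p1 p2 by simp
  qed
  have "4*(m*m) / (((m - aa) * (m - bb)) * ((m + aa) * (m + bb))) \<le> 4*(m*m) / ((m*m/6) * (m*m))"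
  proof (rule divide_left_mono)
    show "(m*m/6) * (m*m) \<le> ((m - aa) * (m - bb)) * ((m + aa) * (m + bb))"
      by (rule mult_mono[OF d1 d2]) (use p1 mm in auto)
    show "0 \<le> 4*(m*m)" using mm by simp
    show "0 < (((m - aa) * (m - bb)) * ((m + aa) * (m + bb))) * ((m*m/6) * (m*m))"
      using mm p1 p2 by simp
  qed
  also have "\<dots> = 24 / (m*m)" using mm by (simp add: field_simps)
  finally show ?thesis unfolding e using p1 p2 mm by simp
qed


definition SS :: "real \<Rightarrow> real" where "SS r = (\<Sum>n. uu (real (Suc n)) * r^n)"
definition TT :: "real \<Rightarrow> real" where "TT r = (\<Sum>n. (-1)^n * uu (real (Suc n)) * r^n)"
definition S2 :: "real \<Rightarrow> real" where "S2 r = (\<Sum>n. vv (real (Suc n)) * r^n)"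
definition T2 :: "real \<Rightarrow> real" where "T2 r = (\<Sum>n. (-1)^n * vv (real (Suc n)) * r^n)"

lemma pi_sq9: "9 < pi^2"
proof -
  have "3*3 < pi*pi" using pi_gt3 by (intro mult_strict_mono) auto
  then show ?thesis by (simp add: power2_eq_square)
qed

lemma uu_abs: "\<bar>uu (real (Suc n))\<bar> \<le> pi^2"
proof (cases n)
  case 0 then show ?thesis using u1 by simp
next
  case (Suc k)
  then have m: "real (Suc n) \<ge> 2" by simp
  have "uu (real (Suc n)) \<le> 6 / real (Suc n)" by (rule u_bounds(2)[OF m])
  also have "\<dots> \<le> 3" using m by (simp add: field_simps)
  finally show ?thesis using u_bounds(3)[OF m] pi_sq9 by simp
qed

lemma vv_abs: "\<bar>vv (real (Suc n))\<bar> \<le> 1"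
proof -
  have m: "real (Suc n) \<ge> 1" by simp
  have "vv (real (Suc n)) \<le> 1 / real (Suc n)" by (rule v_bounds(2)[OF m])
  also have "\<dots> \<le> 1" by simp
  finally show ?thesis using v_bounds(1)[OF m] by simp
qed

lemma bounded_powser_summable_real:
  fixes c :: "nat \<Rightarrow> real"
  assumes "\<And>n. \<bar>c n\<bar> \<le> C" "0 \<le> r" "r < 1"
  shows "summable (\<lambda>n. c n * r^n)"
proof (rule summable_comparison_test[where g="\<lambda>n. C * r^n"])
  show "\<exists>N. \<forall>n\<ge>N. norm (c n * r ^ n) \<le> C * r ^ n"
    using assms by (auto simp: abs_mult intro!: mult_right_mono)
  show "summable (\<lambda>n. C * r^n)" using assms by (intro summable_mult summable_geometric) auto
qed

lemma TT_bound: assumes r: "0 \<le> r" "r < 1" shows "\<bar>TT r\<bar> \<le> pi^2 + 3"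
proof -
  define f where "f n = (-1)^n * uu (real (Suc n)) * r^n" for n
  define d where "d n = uu (real (Suc (Suc n))) * r^(Suc n)" for n
  have sf: "summable f" unfolding f_def
    using bounded_powser_summable_real[of "\<lambda>n. (-1)^n * uu (real (Suc n))" "pi^2" r] r uu_abs
    by (simp add: abs_mult)
  have sd: "summable d"
  proof -
    have "summable (\<lambda>n. uu (real (Suc (Suc n))) * r^n)"
      by (rule bounded_powser_summable_real[OF _ r]) (rule uu_abs)
    then show ?thesis unfolding d_def using summable_mult2[of _ r] by (simp add: mult.assoc mult.commute)
  qed
  have m2: "real (Suc (Suc n)) \<ge> 2" for n by simp
  have dpos: "0 \<le> d n" for n unfolding d_def using u_bounds(3)[OF m2] r by simp
  have dmono: "d (Suc n) \<le> d n" for n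
  proof -
    have "uu (real (Suc (Suc (Suc n)))) \<le> uu (real (Suc (Suc n)))"
      using u_mono[OF m2[of n]] by (simp add: add.commute)
    moreover have "r^(Suc (Suc n)) \<le> r^(Suc n)" using r by (intro power_decreasing) auto
    ultimately show ?thesis unfolding d_def using r u_bounds(3)[OF m2] by (intro mult_mono) auto
  qed
  have d0: "d \<longlonglongrightarrow> 0" by (rule summable_LIMSEQ_zero[OF sd])
  have L1: "0 \<le> (\<Sum>i. (-1)^i * d i)" using summable_Leibniz'(2)[OF d0 dpos dmono, of 0] by simp
  have L2: "(\<Sum>i. (-1)^i * d i) \<le> d 0" using summable_Leibniz'(4)[OF d0 dpos dmono, of 0] by simp
  have "d 0 \<le> 3"
  proof -
    have "d 0 = uu 2 * r" unfolding d_def by simp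
    also have "\<dots> \<le> 3 * 1" using u_bounds(2,3)[of 2] r by (intro mult_mono) auto
    finally show ?thesis by simp
  qed
  have fs: "f (Suc n) = - ((-1)^n * d n)" for n unfolding f_def d_def by simp
  have "TT r = f 0 + (\<Sum>n. f (Suc n))" unfolding TT_def f_def[symmetric] using suminf_split_head[OF sf] by simp
  also have "(\<Sum>n. f (Suc n)) = - (\<Sum>i. (-1)^i * d i)" unfolding fs by (rule suminf_minus[OF summable_Leibniz'(1)[OF d0 dpos dmono]])
  finally have "TT r = - (pi^2) - (\<Sum>i. (-1)^i * d i)" using u1 unfolding f_def by simp
  then show ?thesis using L1 L2 \<open>d 0 \<le> 3\<close> pi_sq9 unfolding abs_le_iff by linarith
qed

lemma T2_bound: assumes r: "0 \<le> r" "r < 1" shows "\<bar>T2 r\<bar> \<le> 1"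
proof -
  define d where "d n = vv (real (Suc n)) * r^n" for n
  have sd: "summable d" unfolding d_def
    using bounded_powser_summable_real[of "\<lambda>n. vv (real (Suc n))" 1 r] r vv_abs by simp
  have m1: "real (Suc n) \<ge> 1" for n by simp
  have dpos: "0 \<le> d n" for n unfolding d_def using v_bounds(1)[OF m1] r by simp
  have dmono: "d (Suc n) \<le> d n" for n
  proof -
    have "vv (real (Suc (Suc n))) \<le> vv (real (Suc n))"
      using v_mono[OF m1[of n]] by (simp add: add.commute)
    moreover have "r^(Suc n) \<le> r^n" using r by (intro power_decreasing) auto
    ultimately show ?thesis unfolding d_def using r v_bounds(1)[OF m1] by (intro mult_mono) auto
  qed
  have d0: "d \<longlonglongrightarrow> 0" by (rule summable_LIMSEQ_zero[OF sd])
  have L1: "0 \<le> (\<Sum>i. (-1)^i * d i)" using summable_Leibniz'(2)[OF d0 dpos dmono, of 0] by simp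
  have L2: "(\<Sum>i. (-1)^i * d i) \<le> d 0" using summable_Leibniz'(4)[OF d0 dpos dmono, of 0] by simp
  have "d 0 \<le> 1" unfolding d_def using vv_abs[of 0] by simp
  moreover have "T2 r = (\<Sum>i. (-1)^i * d i)" unfolding T2_def d_def by (simp add: mult.assoc)
  ultimately show ?thesis using L1 L2 unfolding abs_le_iff by linarith
qed

definition DD :: real where "DD = (\<Sum>n. \<bar>uu (real (Suc n)) - vv (real (Suc n))\<bar>)"

lemma DD_summable: "summable (\<lambda>n. \<bar>uu (real (Suc n)) - vv (real (Suc n))\<bar>)"
proof (rule summable_comparison_test[where g="\<lambda>n. 24 * inverse (real (Suc n) ^ 2)"])
  show "\<exists>N. \<forall>n\<ge>N. norm \<bar>uu (real (Suc n)) - vv (real (Suc n))\<bar> \<le> 24 * inverse (real (Suc n) ^ 2)"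
  proof (intro exI allI impI)
    fix n :: nat assume "n \<ge> 1"
    then have m: "real (Suc n) \<ge> 2" by simp
    show "norm \<bar>uu (real (Suc n)) - vv (real (Suc n))\<bar> \<le> 24 * inverse (real (Suc n) ^ 2)"
      using uv_diff[OF m] by (simp add: power2_eq_square divide_inverse)
  qed
  have "summable (\<lambda>n. inverse (real n ^ 2))" by (rule inverse_power_summable) simp
  then have "summable (\<lambda>n. inverse (real (Suc n) ^ 2))" by (subst summable_Suc_iff)
  then show "summable (\<lambda>n. 24 * inverse (real (Suc n) ^ 2))" by (rule summable_mult)
qed

lemma SS_summable: "0 \<le> r \<Longrightarrow> r < 1 \<Longrightarrow> summable (\<lambda>n. uu (real (Suc n)) * r^n)"
  by (rule bounded_powser_summable_real[where C="pi^2", OF uu_abs])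
lemma S2_summable: "0 \<le> r \<Longrightarrow> r < 1 \<Longrightarrow> summable (\<lambda>n. vv (real (Suc n)) * r^n)"
  by (rule bounded_powser_summable_real[where C=1, OF vv_abs])
lemma TT_summable: "0 \<le> r \<Longrightarrow> r < 1 \<Longrightarrow> summable (\<lambda>n. (-1)^n * uu (real (Suc n)) * r^n)"
  using bounded_powser_summable_real[of "\<lambda>n. (-1)^n * uu (real (Suc n))" "pi^2" r] uu_abs
  by (simp add: abs_mult)
lemma T2_summable: "0 \<le> r \<Longrightarrow> r < 1 \<Longrightarrow> summable (\<lambda>n. (-1)^n * vv (real (Suc n)) * r^n)"
  using bounded_powser_summable_real[of "\<lambda>n. (-1)^n * vv (real (Suc n))" 1 r] vv_abs
  by (simp add: abs_mult)

lemma SS_S2: assumes r: "0 \<le> r" "r < 1" shows "\<bar>SS r - S2 r\<bar> \<le> DD"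
proof -
  define x where "x n = (uu (real (Suc n)) - vv (real (Suc n))) * r^n" for n
  have "SS r - S2 r = (\<Sum>n. x n)" unfolding SS_def S2_def x_def
    using suminf_diff[OF SS_summable[OF r] S2_summable[OF r]] by (simp add: left_diff_distrib)
  moreover have sx: "summable (\<lambda>n. \<bar>x n\<bar>)"
  proof (rule summable_comparison_test[OF _ DD_summable])
    show "\<exists>N. \<forall>n\<ge>N. norm \<bar>x n\<bar> \<le> \<bar>uu (real (Suc n)) - vv (real (Suc n))\<bar>"
      unfolding x_def using r by (auto simp: abs_mult intro!: mult_left_le power_le_one)
  qed
  moreover have "(\<Sum>n. \<bar>x n\<bar>) \<le> DD" unfolding DD_def
    by (rule suminf_le[OF _ sx DD_summable]) (unfold x_def, use r in \<open>auto simp: abs_mult intro!: mult_left_le power_le_one\<close>)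
  ultimately show ?thesis using summable_rabs[OF sx] by linarith
qed

lemma SS_lower: assumes r: "0 \<le> r" "r < 1" shows "SS r \<ge> - (pi^2) + r^K * (harm (Suc K) - 1)"
proof -
  define f where "f n = uu (real (Suc n)) * r^n" for n
  have "sum f {..<Suc K} \<le> SS r" unfolding SS_def f_def[symmetric]
  proof (rule sum_le_suminf)
    show "summable f" unfolding f_def by (rule SS_summable[OF r])
    show "finite {..<Suc K}" by simp
    fix n assume "n \<in> - {..<Suc K}"
    then have "real (Suc n) \<ge> 2" by simp
    then show "0 \<le> f n" unfolding f_def using u_bounds(3) r by simp
  qed
  moreover have "sum f {..<Suc K} = f 0 + (\<Sum>n<K. f (Suc n))" by (rule sum.lessThan_Suc_shift)
  moreover have "f 0 = - (pi^2)" unfolding f_def using u1 by simp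
  moreover have "(\<Sum>n<K. f (Suc n)) \<ge> (\<Sum>n<K. r^K * inverse (real (Suc (Suc n))))"
  proof (rule sum_mono)
    fix n assume "n \<in> {..<K}"
    then have nk: "Suc n \<le> K" by simp
    have m: "real (Suc (Suc n)) \<ge> 2" by simp
    have "r^K \<le> r^(Suc n)" using r nk by (intro power_decreasing) auto
    moreover have "inverse (real (Suc (Suc n))) \<le> uu (real (Suc (Suc n)))"
      using u_bounds(1)[OF m] by (simp add: divide_inverse)
    ultimately show "r^K * inverse (real (Suc (Suc n))) \<le> f (Suc n)"
      unfolding f_def using r by (subst mult.commute) (intro mult_mono, auto)
  qed
  moreover have "(\<Sum>n<K. r^K * inverse (real (Suc (Suc n)))) = r^K * (harm (Suc K) - 1)"
  proof -
    have "harm (Suc K) = (\<Sum>k<Suc K. inverse (real (Suc k)) :: real)" by (rule harm_altdef)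
    also have "\<dots> = 1 + (\<Sum>k<K. inverse (real (Suc (Suc k))))" by (subst sum.lessThan_Suc_shift) simp
    finally show ?thesis by (simp add: sum_distrib_left)
  qed
  ultimately show ?thesis by linarith
qed


definition hc :: "nat \<Rightarrow> complex" where "hc n = acoef EE n"
definition gc :: "nat \<Rightarrow> complex" where "gc n = (if n = 0 then 0 else cnj (bcoef EE n))"
definition HH :: "complex \<Rightarrow> complex" where "HH z = (\<Sum>n. hc n * z^n)"
definition GG :: "complex \<Rightarrow> complex" where "GG z = (\<Sum>n. gc n * z^n)"

lemma EE_cont02: "continuous_on {0..2*pi} EE" by (rule EE_cont)

lemma hc_bound: "norm (hc n) \<le> 1"
  unfolding hc_def by (rule coef_bound(1)[OF EE_cont02]) (simp add: EE_norm)
lemma gc_bound: "norm (gc n) \<le> 1"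
  unfolding gc_def using coef_bound(2)[OF EE_cont02, of n] by (simp add: EE_norm)

lemma powser_props:
  fixes c :: "nat \<Rightarrow> complex"
  assumes c: "\<And>n. norm (c n) \<le> 1"
  shows "(\<lambda>z. \<Sum>n. c n * z^n) holomorphic_on ball 0 1"
    and "z \<in> ball 0 1 \<Longrightarrow> deriv (\<lambda>z. \<Sum>n. c n * z^n) z = (\<Sum>n. diffs c n * z^n)"
proof -
  have d: "((\<lambda>z. \<Sum>n. c n * z^n) has_field_derivative (\<Sum>n. diffs c n * z^n)) (at z)" if "z \<in> ball 0 1" for z
    by (rule termdiffs_strong'[where K=1]) (use that in \<open>auto intro: powser_bounded_summable[OF c]\<close>)
  show "(\<lambda>z. \<Sum>n. c n * z^n) holomorphic_on ball 0 1"
  proof (subst holomorphic_on_open[OF open_ball], intro ballI)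
    fix x :: complex assume "x \<in> ball 0 1"
    then show "\<exists>f'. ((\<lambda>z. \<Sum>n. c n * z^n) has_field_derivative f') (at x)" using d by (intro exI)
  qed
  show "z \<in> ball 0 1 \<Longrightarrow> deriv (\<lambda>z. \<Sum>n. c n * z^n) z = (\<Sum>n. diffs c n * z^n)"
    by (rule DERIV_imp_deriv[OF d])
qed

lemma HH_hol: "HH holomorphic_on ball 0 1"
  using powser_props(1)[OF hc_bound] unfolding HH_def[abs_def] .
lemma GG_hol: "GG holomorphic_on ball 0 1"
  using powser_props(1)[OF gc_bound] unfolding GG_def[abs_def] .
lemma HH_deriv: "z \<in> ball 0 1 \<Longrightarrow> deriv HH z = (\<Sum>n. diffs hc n * z^n)"
  using powser_props(2)[OF hc_bound] unfolding HH_def[abs_def] .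
lemma GG_deriv: "z \<in> ball 0 1 \<Longrightarrow> deriv GG z = (\<Sum>n. diffs gc n * z^n)"
  using powser_props(2)[OF gc_bound] unfolding GG_def[abs_def] .

lemma w_eq: assumes z: "z \<in> ball 0 1" shows "poisson_integral Fb z = HH z + cnj (GG z)"
proof -
  have nz: "norm z < 1" using z by simp
  have "poisson_integral Fb z = integral {0..2*pi} (\<lambda>t. of_real (poisson_kernel (cmod z) (t - Arg z)) * EE t)"
    unfolding poisson_integral_def by (rule integral_cong) (simp add: FbE)
  also have "\<dots> = (\<Sum>n. acoef EE n * z^n) + (\<Sum>n. bcoef EE (Suc n) * cnj z ^ Suc n)"
    by (rule poisson_series[OF EE_cont02 _ nz]) (simp add: EE_norm)
  also have "(\<Sum>n. bcoef EE (Suc n) * cnj z ^ Suc n) = cnj (GG z)"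
  proof -
    have sg: "summable (\<lambda>n. gc n * z^n)" by (rule powser_bounded_summable[OF gc_bound nz])
    have "(\<lambda>n. gc n * z^n) sums GG z" unfolding GG_def by (rule summable_sums[OF sg])
    then have "(\<lambda>n. cnj (gc n * z^n)) sums cnj (GG z)" by (subst sums_cnj)
    then have s1: "summable (\<lambda>n. cnj (gc n * z^n))" "cnj (GG z) = (\<Sum>n. cnj (gc n * z^n))"
      by (auto simp: sums_iff)
    have "(\<Sum>n. cnj (gc (Suc n) * z^(Suc n))) = (\<Sum>n. cnj (gc n * z^n)) - cnj (gc 0 * z^0)"
      by (rule suminf_split_head[OF s1(1)])
    also have "\<dots> = cnj (GG z)" using s1(2) by (simp add: gc_def)
    finally show ?thesis by (simp add: gc_def)
  qed
  finally show ?thesis unfolding HH_def hc_def by simp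
qed

lemma gen_term:
  fixes e :: complex
  assumes "D \<noteq> 0" "P \<noteq> 0"
  shows "of_real m * (c * (e + of_real s) / of_real (P * D)) * of_real q
       = c / of_real P * (e * of_real (m / D * q) + of_real (s * (m / D) * q))"
  using assms by (simp add: field_simps)

lemma series_combine:
  fixes a b :: "nat \<Rightarrow> real" and c e :: complex
  assumes "summable a" "summable b"
  shows "(\<Sum>n. c * (e * of_real (a n) - of_real (b n))) = c * (e * of_real (suminf a) - of_real (suminf b))"
proof -
  have sa: "summable (\<lambda>n. e * of_real (a n))" using summable_mult[OF summable_of_real[OF assms(1)], of e] .
  have sb: "summable (\<lambda>n. (of_real (b n) :: complex))" using summable_of_real[OF assms(2)] .
  have "(\<Sum>n. c * (e * of_real (a n) - of_real (b n))) = c * (\<Sum>n. e * of_real (a n) - of_real (b n))"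
    by (rule suminf_mult[OF summable_diff[OF sa sb]])
  also have "(\<Sum>n. e * of_real (a n) - of_real (b n)) = (\<Sum>n. e * of_real (a n)) - (\<Sum>n. of_real (b n))"
    by (rule suminf_diff[OF sa sb, symmetric])
  also have "(\<Sum>n. e * of_real (a n)) = e * (\<Sum>n. of_real (a n))" by (rule suminf_mult[OF summable_of_real[OF assms(1)]])
  also have "(\<Sum>n. (of_real (a n) :: complex)) = of_real (suminf a)" by (rule suminf_of_real[OF assms(1), symmetric])
  also have "(\<Sum>n. (of_real (b n) :: complex)) = of_real (suminf b)" by (rule suminf_of_real[OF assms(2), symmetric])
  finally show ?thesis .
qed

lemma HH_deriv_real: assumes r: "0 \<le> r" "r < 1"
  shows "deriv HH (of_real r) = \<i> / of_real (pi^2) * (exp \<i> * of_real (SS r) - of_real (TT r))"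
proof -
  have th: "diffs hc n * of_real r ^ n = \<i> / of_real (pi^2) * (exp \<i> * of_real (uu (real (Suc n)) * r^n) - of_real ((-1)^n * uu (real (Suc n)) * r^n))" for n
  proof -
    have D: "(real (Suc n) - aa) * (real (Suc n) - bb) \<noteq> 0"
      by (metis nat_ne_aa nat_ne_bb mult_eq_0_iff right_minus_eq)
    have P: "pi^2 \<noteq> 0" by simp
    have "diffs hc n * of_real r ^ n = of_real (real (Suc n)) * (\<i> * (exp \<i> + of_real (-((-1)^n))) / of_real (pi^2 * ((real (Suc n) - aa) * (real (Suc n) - bb)))) * of_real (r^n)"
      unfolding diffs_def hc_def acoef_EE by simp
    also have "\<dots> = \<i> / of_real (pi^2) * (exp \<i> * of_real (real (Suc n) / ((real (Suc n) - aa) * (real (Suc n) - bb)) * r^n) + of_real (-((-1)^n) * (real (Suc n) / ((real (Suc n) - aa) * (real (Suc n) - bb))) * r^n))"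
      by (rule gen_term[OF D P])
    finally show ?thesis unfolding uu_def by simp
  qed
  have "deriv HH (of_real r) = (\<Sum>n. diffs hc n * of_real r ^ n)" by (rule HH_deriv) (use r in simp)
  also have "\<dots> = (\<Sum>n. \<i> / of_real (pi^2) * (exp \<i> * of_real (uu (real (Suc n)) * r^n) - of_real ((-1)^n * uu (real (Suc n)) * r^n)))"
    unfolding th ..
  also have "\<dots> = \<i> / of_real (pi^2) * (exp \<i> * of_real (SS r) - of_real (TT r))"
    unfolding SS_def TT_def by (rule series_combine[OF SS_summable[OF r] TT_summable[OF r]])
  finally show ?thesis .
qed

lemma GG_deriv_real: assumes r: "0 \<le> r" "r < 1"
  shows "deriv GG (of_real r) = - \<i> / of_real (pi^2) * (cnj (exp \<i>) * of_real (S2 r) - of_real (T2 r))"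
proof -
  have th: "diffs gc n * of_real r ^ n = - \<i> / of_real (pi^2) * (cnj (exp \<i>) * of_real (vv (real (Suc n)) * r^n) - of_real ((-1)^n * vv (real (Suc n)) * r^n))" for n
  proof -
    have D: "(real (Suc n) + aa) * (real (Suc n) + bb) \<noteq> 0"
    proof -
      have "real (Suc n) \<ge> 1" by simp
      from v_pos(2)[OF this] show ?thesis by (metis less_irrefl)
    qed
    have P: "pi^2 \<noteq> 0" by simp
    have "diffs gc n * of_real r ^ n = of_real (real (Suc n)) * (- \<i> * (cnj (exp \<i>) + of_real (-((-1)^n))) / of_real (pi^2 * ((real (Suc n) + aa) * (real (Suc n) + bb)))) * of_real (r^n)"
      unfolding diffs_def gc_def bcoef_EE by simp
    also have "\<dots> = - \<i> / of_real (pi^2) * (cnj (exp \<i>) * of_real (real (Suc n) / ((real (Suc n) + aa) * (real (Suc n) + bb)) * r^n) + of_real (-((-1)^n) * (real (Suc n) / ((real (Suc n) + aa) * (real (Suc n) + bb))) * r^n))"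
      by (rule gen_term[OF D P])
    finally show ?thesis unfolding vv_def by simp
  qed
  have "deriv GG (of_real r) = (\<Sum>n. diffs gc n * of_real r ^ n)" by (rule GG_deriv) (use r in simp)
  also have "\<dots> = (\<Sum>n. - \<i> / of_real (pi^2) * (cnj (exp \<i>) * of_real (vv (real (Suc n)) * r^n) - of_real ((-1)^n * vv (real (Suc n)) * r^n)))"
    unfolding th ..
  also have "\<dots> = - \<i> / of_real (pi^2) * (cnj (exp \<i>) * of_real (S2 r) - of_real (T2 r))"
    unfolding S2_def T2_def by (rule series_combine[OF S2_summable[OF r] T2_summable[OF r]])
  finally show ?thesis .
qed


lemma norm_HH': assumes r: "0 \<le> r" "r < 1"
  shows "norm (deriv HH (of_real r)) = norm (exp \<i> * of_real (SS r) - of_real (TT r)) / pi^2"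
  unfolding HH_deriv_real[OF r] by (simp add: norm_mult norm_divide norm_power)

lemma norm_GG': assumes r: "0 \<le> r" "r < 1"
  shows "norm (deriv GG (of_real r)) = norm (exp \<i> * of_real (S2 r) - of_real (T2 r)) / pi^2"
proof -
  have "cnj (exp \<i>) * of_real (S2 r) - of_real (T2 r) = cnj (exp \<i> * of_real (S2 r) - of_real (T2 r))" by simp
  then have "norm (cnj (exp \<i>) * of_real (S2 r) - of_real (T2 r)) = norm (exp \<i> * of_real (S2 r) - of_real (T2 r))"
    by (metis complex_mod_cnj)
  then show ?thesis unfolding GG_deriv_real[OF r] by (simp add: norm_mult norm_divide norm_power)
qed

lemma K1: assumes r: "0 \<le> r" "r < 1"
  shows "norm (deriv HH (of_real r)) \<ge> (SS r - \<bar>TT r\<bar>) / pi^2"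
proof -
  have "norm (exp \<i> * of_real (SS r) - of_real (TT r)) \<ge> norm (exp \<i> * of_real (SS r)) - norm (of_real (TT r) :: complex)"
    by (rule norm_triangle_ineq2)
  moreover have "norm (exp \<i> * of_real (SS r)) = \<bar>SS r\<bar>" by (simp add: norm_mult)
  ultimately have "norm (exp \<i> * of_real (SS r) - of_real (TT r)) \<ge> SS r - \<bar>TT r\<bar>" by simp
  then show ?thesis unfolding norm_HH'[OF r] by (intro divide_right_mono) auto
qed

lemma K2: assumes r: "0 \<le> r" "r < 1"
  shows "norm (deriv HH (of_real r)) - norm (deriv GG (of_real r)) \<le> (DD + pi^2 + 4) / pi^2"
proof -
  let ?X = "exp \<i> * of_real (SS r) - of_real (TT r) :: complex"
  let ?Y = "exp \<i> * of_real (S2 r) - of_real (T2 r) :: complex"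
  have "norm ?X - norm ?Y \<le> norm (?X - ?Y)" by (rule norm_triangle_ineq2)
  also have "?X - ?Y = exp \<i> * of_real (SS r - S2 r) - of_real (TT r) + of_real (T2 r)"
    by (simp add: algebra_simps)
  also have "norm \<dots> \<le> norm (exp \<i> * of_real (SS r - S2 r) - of_real (TT r)) + norm (of_real (T2 r) :: complex)"
    by (rule norm_triangle_ineq)
  also have "\<dots> \<le> (norm (exp \<i> * of_real (SS r - S2 r)) + norm (of_real (TT r) :: complex)) + norm (of_real (T2 r) :: complex)"
    by (intro add_right_mono norm_triangle_ineq4)
  also have "\<dots> = \<bar>SS r - S2 r\<bar> + \<bar>TT r\<bar> + \<bar>T2 r\<bar>" by (simp add: norm_mult del: of_real_diff)
  also have "\<dots> \<le> DD + (pi^2 + 3) + 1" using SS_S2[OF r] TT_bound[OF r] T2_bound[OF r] by linarith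
  finally have "norm ?X - norm ?Y \<le> DD + pi^2 + 4" by simp
  then show ?thesis unfolding norm_HH'[OF r] norm_GG'[OF r]
    by (simp add: diff_divide_distrib[symmetric] divide_right_mono)
qed

lemma unbounded: "\<exists>r. 0 \<le> r \<and> r < 1 \<and> norm (deriv HH (of_real r)) > M"
proof -
  define X where "X = 2 * (M * pi^2) + 4 * pi^2 + 8"
  have "eventually (\<lambda>n. harm n \<ge> X) sequentially"
    using harm_at_top by (simp add: filterlim_at_top)
  then obtain N where N: "\<And>n. n \<ge> N \<Longrightarrow> harm n \<ge> X" by (auto simp: eventually_sequentially)
  define K where "K = Suc N"
  have K1': "K \<ge> 1" unfolding K_def by simp
  have hK: "harm (Suc K) \<ge> X" using N unfolding K_def by simp
  define r where "r = 1 - 1 / (2 * real K)"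
  have r: "0 \<le> r" "r < 1" unfolding r_def using K1' by (auto simp: field_simps)
  have rK: "r^K \<ge> 1/2"
  proof -
    have "1 + real K * (- 1 / (2 * real K)) \<le> (1 + (- 1 / (2 * real K)))^K"
      by (rule Bernoulli_inequality) (use K1' in \<open>simp add: field_simps\<close>)
    then show ?thesis unfolding r_def using K1' by (simp add: field_simps)
  qed
  have h1: "(harm (Suc K) :: real) - 1 \<ge> 0" using harm_mono[of 1 "Suc K"] by (simp add: harm_expand)
  have "SS r \<ge> - (pi^2) + r^K * (harm (Suc K) - 1)" by (rule SS_lower[OF r])
  moreover have "r^K * (harm (Suc K) - 1) \<ge> 1/2 * (harm (Suc K) - 1)"
    using rK h1 by (intro mult_right_mono) auto
  moreover have "1/2 * ((harm (Suc K) :: real) - 1) \<ge> (X - 1) / 2" using hK by simp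
  ultimately have S: "SS r \<ge> - (pi^2) + (X - 1) / 2" by linarith
  have T: "\<bar>TT r\<bar> \<le> pi^2 + 3" by (rule TT_bound[OF r])
  have "(X - 1) / 2 = M * pi^2 + 2 * pi^2 + 7/2" unfolding X_def by (simp add: field_simps)
  then have "SS r - \<bar>TT r\<bar> \<ge> M * pi^2 + 1/2" using S T by linarith
  then have "(SS r - \<bar>TT r\<bar>) / pi^2 \<ge> (M * pi^2 + 1/2) / pi^2" by (intro divide_right_mono) auto
  moreover have "(M * pi^2 + 1/2) / pi^2 > M" by (simp add: field_simps)
  ultimately show ?thesis using K1[OF r] r by (intro exI[of _ r]) auto
qed


abbreviation "ww \<equiv> poisson_integral Fb"

lemma harmonic_w: "harmonic_on (ball 0 1) ww"
  by (rule harmonic_hol[OF open_ball HH_hol GG_hol w_eq])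

lemma dz_w: assumes z: "z \<in> ball 0 1" shows "dz ww z = deriv HH z" "dzbar ww z = cnj (deriv GG z)"
proof -
  have x: "dx ww z = deriv HH z + cnj (deriv GG z)" and y: "dy ww z = \<i> * deriv HH z + cnj (\<i> * deriv GG z)"
    using dxdy_hol[OF open_ball HH_hol GG_hol w_eq z] by auto
  show "dz ww z = deriv HH z" unfolding dz_def x y by (simp add: algebra_simps)
  show "dzbar ww z = cnj (deriv GG z)" unfolding dzbar_def x y by (simp add: algebra_simps)
qed

lemma qr_alg:
  fixes A B K C :: real
  assumes "0 \<le> A" "0 \<le> B" "1 \<le> K" "(A + B)^2 \<le> K * (A^2 - B^2)" "A - B \<le> C"
  shows "A \<le> K * C"
proof (cases "A + B = 0")
  case True
  then have "A = 0" "B = 0" using assms(1,2) by auto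
  then show ?thesis using assms(3,5) by simp
next
  case False
  then have p: "A + B > 0" using assms(1,2) by simp
  have "(A + B) * (A + B) \<le> (A + B) * (K * (A - B))"
    using assms(4) by (simp add: power2_eq_square algebra_simps)
  then have "A + B \<le> K * (A - B)" using p by simp
  also have "\<dots> \<le> K * C" using assms(3,5) by simp
  finally show ?thesis using assms(2) by simp
qed

lemma not_qr: "\<not> quasiregular_on (ball 0 1) ww"
proof
  assume "quasiregular_on (ball 0 1) ww"
  then obtain K where K: "K \<ge> 1" and q: "\<And>z. z \<in> ball 0 1 \<Longrightarrow>
     (cmod (dz ww z) + cmod (dzbar ww z))^2 \<le> K * ((cmod (dz ww z))^2 - (cmod (dzbar ww z))^2)"
    unfolding quasiregular_on_def by blast
  define C0 where "C0 = (DD + pi^2 + 4) / pi^2"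
  obtain r where r: "0 \<le> r" "r < 1" and big: "norm (deriv HH (of_real r)) > K * C0"
    using unbounded[of "K * C0"] by blast
  have z: "of_real r \<in> ball (0::complex) 1" using r by simp
  have "norm (deriv HH (of_real r)) \<le> K * C0"
  proof (rule qr_alg[OF norm_ge_zero norm_ge_zero K])
    show "(norm (deriv HH (of_real r)) + norm (deriv GG (of_real r)))^2
        \<le> K * ((norm (deriv HH (of_real r)))^2 - (norm (deriv GG (of_real r)))^2)"
      using q[OF z] unfolding dz_w[OF z] by simp
    show "norm (deriv HH (of_real r)) - norm (deriv GG (of_real r)) \<le> C0"
      unfolding C0_def by (rule K2[OF r])
  qed
  then show False using big by simp
qed

lemma not_Linf: "\<not> in_Linf (ball 0 1) (dz ww)"
proof
  assume "in_Linf (ball 0 1) (dz ww)"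
  then obtain M where ae: "AE x in lebesgue_on (ball 0 1). norm (dz ww x) \<le> M"
    unfolding in_Linf_def by blast
  obtain r where r: "0 \<le> r" "r < 1" and big: "norm (deriv HH (of_real r)) > M"
    using unbounded[of M] by blast
  define z where "z = (of_real r :: complex)"
  have zb: "z \<in> ball 0 1" using r unfolding z_def by simp
  have cont: "continuous_on (ball 0 1) (\<lambda>x. norm (deriv HH x))"
    using holomorphic_on_imp_continuous_on[OF holomorphic_deriv[OF HH_hol open_ball]]
    by (rule continuous_on_norm)
  define U where "U = (\<lambda>x. norm (deriv HH x)) -` {M<..} \<inter> ball 0 1"
  have "open U" unfolding U_def using cont open_ball by (subst (asm) continuous_on_open_vimage) auto
  moreover have "z \<in> U" unfolding U_def using zb big z_def by simp
  ultimately obtain d where d: "d > 0" "ball z d \<subseteq> U" by (metis openE)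
  have Ub: "U \<subseteq> ball 0 1" unfolding U_def by auto
  have ae2: "AE x in lebesgue_on (ball 0 1). x \<notin> ball z d"
  proof (rule lebesgue_on_mono[OF ae])
    fix x assume x: "norm (dz ww x) \<le> M" "x \<in> ball 0 1"
    show "x \<notin> ball z d"
    proof
      assume "x \<in> ball z d"
      then have "x \<in> U" using d by auto
      then have "norm (deriv HH x) > M" unfolding U_def by simp
      then show False using x dz_w(1)[OF x(2)] by simp
    qed
  qed
  have "AE x in lebesgue. x \<in> ball 0 1 \<longrightarrow> x \<notin> ball z d"
    using ae2 by (subst (asm) AE_restrict_space_iff) auto
  then have "AE x in lebesgue. x \<notin> ball z d"
  proof (rule eventually_mono)
    fix x assume h: "x \<in> ball 0 1 \<longrightarrow> x \<notin> ball z d"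
    show "x \<notin> ball z d"
    proof
      assume "x \<in> ball z d"
      then have "x \<in> ball 0 1" using d(2) Ub by blast
      then show False using h \<open>x \<in> ball z d\<close> by blast
    qed
  qed
  then have "AE x in lborel. x \<notin> ball z d" by (simp add: AE_completion_iff)
  then have "emeasure lborel (ball z d) = 0"
    by (subst (asm) AE_iff_measurable[of "ball z d"]) auto
  moreover have "emeasure lborel (ball z d) > 0"
    using d unit_ball_vol_pos[of "real DIM(complex)"] by (simp add: emeasure_ball)
  ultimately show False by simp
qed


lemma int_exp_zero:
  assumes c: "c \<noteq> 0" and e: "exp (\<i> * of_real (c * (2*pi))) = 1"
  shows "((\<lambda>t. exp (\<i> * of_real (0 + c * t))) has_integral 0) {0..2*pi}"
proof -
  have "((\<lambda>t. exp (\<i> * of_real (0 + c * t))) has_integral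
     ((exp (\<i> * of_real (0 + c * (2*pi))) - exp (\<i> * of_real (0 + c * 0))) / (\<i> * of_real c))) {0..2*pi}"
    by (rule ftc_exp) (use c in auto)
  then show ?thesis using e by simp
qed

definition one :: "real \<Rightarrow> complex" where "one t = 1"

lemma acoef_one: "acoef one n = (if n = 0 then 1 else 0)"
proof (cases "n = 0")
  case True then show ?thesis by (simp add: acoef_def one_def scaleR_conv_of_real)
next
  case False
  have e: "exp (-(\<i> * of_real t)) ^ n * one t = exp (\<i> * of_real (0 + (- real n) * t))" for t
    unfolding one_def by (simp add: exp_of_nat_mult[symmetric] algebra_simps)
  have "((\<lambda>t. exp (-(\<i> * of_real t)) ^ n * one t) has_integral 0) {0..2*pi}"
    unfolding e by (rule int_exp_zero) (use False exp_n_pi(4)[of n] in auto)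
  then show ?thesis using False by (simp add: acoef_def integral_unique)
qed

lemma bcoef_one: "bcoef one (Suc n) = 0"
proof -
  have e: "exp (\<i> * of_real t) ^ Suc n * one t = exp (\<i> * of_real (0 + real (Suc n) * t))" for t
    unfolding one_def by (simp only: exp_of_nat_mult[symmetric]) (simp add: algebra_simps)
  have "((\<lambda>t. exp (\<i> * of_real t) ^ Suc n * one t) has_integral 0) {0..2*pi}"
    unfolding e by (rule int_exp_zero) (use exp_n_pi(3)[of "Suc n"] in auto)
  then show ?thesis by (simp add: bcoef_def integral_unique)
qed

lemma kernel_int: assumes z: "norm z < 1"
  shows "((\<lambda>t. poisson_kernel (cmod z) (t - Arg z)) has_integral 1) {0..2*pi}"
proof -
  have "integral {0..2*pi} (\<lambda>t. of_real (poisson_kernel (cmod z) (t - Arg z)) * one t)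
      = (\<Sum>n. acoef one n * z^n) + (\<Sum>n. bcoef one (Suc n) * cnj z ^ Suc n)"
    by (rule poisson_series[OF _ _ z]) (auto simp: one_def)
  also have "(\<Sum>n. acoef one n * z^n) = 1"
  proof -
    have "(\<lambda>n. if n = 0 then (\<lambda>n. acoef one n * z^n) n else 0) sums ((\<lambda>n. acoef one n * z^n) 0)"
      by (rule sums_single)
    moreover have "(\<lambda>n. if n = 0 then (\<lambda>n. acoef one n * z^n) n else 0) = (\<lambda>n. acoef one n * z^n)"
      by (auto simp: acoef_one)
    ultimately show ?thesis by (simp add: sums_iff acoef_one)
  qed
  also have "(\<Sum>n. bcoef one (Suc n) * cnj z ^ Suc n) = 0" by (simp add: bcoef_one)
  finally have I: "integral {0..2*pi} (\<lambda>t. of_real (poisson_kernel (cmod z) (t - Arg z)) * one t) = 1" by simp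
  have c: "continuous_on {0..2*pi} (\<lambda>t. poisson_kernel (cmod z) (t - Arg z))"
  proof -
    have "1 - 2 * cmod z * cos s + (cmod z)^2 > 0" for s
    proof -
      have "2 * cmod z * cos s \<le> 2 * cmod z" using cos_le_one[of s] by (simp add: mult_left_le)
      moreover have "(1 - cmod z)^2 > 0" using z by simp
      ultimately show ?thesis by (simp add: power2_eq_square algebra_simps)
    qed
    then show ?thesis unfolding poisson_kernel_def
      by (intro continuous_intros) (auto simp: less_imp_neq[THEN not_sym])
  qed
  have hi: "((\<lambda>t. poisson_kernel (cmod z) (t - Arg z)) has_integral integral {0..2*pi} (\<lambda>t. poisson_kernel (cmod z) (t - Arg z))) {0..2*pi}"
    using integrable_continuous_interval[OF c] by (rule integrable_integral)
  moreover have "integral {0..2*pi} (\<lambda>t. poisson_kernel (cmod z) (t - Arg z)) = 1"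
  proof -
    have "((of_real \<circ> (\<lambda>t. poisson_kernel (cmod z) (t - Arg z))) has_integral (of_real (integral {0..2*pi} (\<lambda>t. poisson_kernel (cmod z) (t - Arg z))) :: complex)) {0..2*pi}"
      by (rule has_integral_linear[OF hi bounded_linear_of_real])
    then have "(of_real (integral {0..2*pi} (\<lambda>t. poisson_kernel (cmod z) (t - Arg z))) :: complex) = integral {0..2*pi} (\<lambda>t. of_real (poisson_kernel (cmod z) (t - Arg z)) * one t)"
      by (simp add: o_def one_def integral_unique)
    then show ?thesis using I by simp
  qed
  ultimately show ?thesis by simp
qed

lemma kernel_pos: assumes z: "norm z < 1" shows "poisson_kernel (cmod z) s > 0"
proof -
  have "2 * cmod z * cos s \<le> 2 * cmod z" using cos_le_one[of s] by (simp add: mult_left_le)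
  moreover have "(1 - cmod z)^2 > 0" using z by simp
  ultimately have d: "1 - 2 * cmod z * cos s + (cmod z)^2 > 0" by (simp add: power2_eq_square algebra_simps)
  have "(cmod z)^2 < 1" using z by (simp add: power_less_one_iff abs_square_less_1)
  then show ?thesis unfolding poisson_kernel_def using d by simp
qed

lemma kernel_cont: assumes z: "norm z < 1" shows "continuous_on S (\<lambda>t. poisson_kernel (cmod z) (t - Arg z))"
proof -
  have "1 - 2 * cmod z * cos s + (cmod z)^2 > 0" for s
  proof -
    have "2 * cmod z * cos s \<le> 2 * cmod z" using cos_le_one[of s] by (simp add: mult_left_le)
    moreover have "(1 - cmod z)^2 > 0" using z by simp
    ultimately show ?thesis by (simp add: power2_eq_square algebra_simps)
  qed
  then show ?thesis unfolding poisson_kernel_def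
    by (intro continuous_intros) (auto simp: less_imp_neq[THEN not_sym])
qed

lemma unit_re1: fixes w :: complex assumes "norm w = 1" "Re w = 1" shows "w = 1"
proof -
  have "(Re w)^2 + (Im w)^2 = 1" using assms(1) by (simp add: cmod_def)
  then have "Im w = 0" using assms(2) by simp
  then show ?thesis using assms(2) by (simp add: complex_eq_iff)
qed

lemma w_in_ball: assumes z: "z \<in> ball 0 1" shows "ww z \<in> ball 0 1"
proof (rule ccontr)
  assume nb: "ww z \<notin> ball 0 1"
  define W where "W = ww z"
  have nW: "norm W \<ge> 1" using nb unfolding W_def by simp
  have nz: "norm z < 1" using z by simp
  define K where "K t = poisson_kernel (cmod z) (t - Arg z)" for t
  have Kc: "continuous_on {0..2*pi} K" unfolding K_def by (rule kernel_cont[OF nz])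
  have Kp: "K t > 0" for t unfolding K_def by (rule kernel_pos[OF nz])
  have KI: "(K has_integral 1) {0..2*pi}" unfolding K_def by (rule kernel_int[OF nz])
  have Wi: "W = integral {0..2*pi} (\<lambda>t. of_real (K t) * EE t)"
    unfolding W_def poisson_integral_def K_def by (rule integral_cong) (simp add: FbE)
  have cKE: "continuous_on {0..2*pi} (\<lambda>t. of_real (K t) * EE t)"
    by (intro continuous_intros Kc EE_cont)
  have IW: "((\<lambda>t. of_real (K t) * EE t) has_integral W) {0..2*pi}"
    unfolding Wi by (rule integrable_integral[OF integrable_continuous_interval[OF cKE]])
  define u where "u = W / of_real (norm W)"
  have W0: "W \<noteq> 0" using nW by auto
  have nu: "norm u = 1" unfolding u_def using W0 by (simp add: norm_divide)
  have uW: "Re (cnj u * W) = norm W"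
  proof -
    have "cnj u * W = (cnj W * W) / of_real (norm W)" unfolding u_def by simp
    also have "cnj W * W = of_real ((norm W)^2)" by (metis complex_norm_square mult.commute of_real_power)
    finally show ?thesis using W0 by (simp add: power2_eq_square)
  qed
  have IR: "((\<lambda>t. Re (cnj u * (of_real (K t) * EE t))) has_integral norm W) {0..2*pi}"
    using has_integral_linear[OF has_integral_mult_right[OF IW, of "cnj u"] bounded_linear_Re]
    unfolding uW by (simp add: o_def)
  define g where "g t = K t - Re (cnj u * (of_real (K t) * EE t))" for t
  have gK: "g t = K t * (1 - Re (cnj u * EE t))" for t
    unfolding g_def by (simp add: algebra_simps)
  have IG: "(g has_integral (1 - norm W)) {0..2*pi}" unfolding g_def by (rule has_integral_diff[OF KI IR])
  have Re_le: "Re (cnj u * EE t) \<le> 1" for t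
  proof -
    have "Re (cnj u * EE t) \<le> norm (cnj u * EE t)" by (rule complex_Re_le_cmod)
    also have "\<dots> = 1" using nu by (simp add: norm_mult EE_norm)
    finally show ?thesis .
  qed
  have gpos: "g t \<ge> 0" for t unfolding gK using Kp[of t] Re_le[of t] by simp
  have "1 - norm W \<ge> 0" by (rule has_integral_nonneg[OF IG]) (use gpos in auto)
  then have "norm W = 1" using nW by simp
  then have IG0: "(g has_integral 0) (cbox 0 (2*pi))" using IG by simp
  have gc: "continuous_on (cbox 0 (2*pi)) g"
    unfolding g_def by (intro continuous_intros Kc[unfolded atLeastAtMost_def] EE_cont) (auto simp: Kc cbox_interval)
  have g0: "g t = 0" if "t \<in> {0..2*pi}" for t
    by (rule has_integral_0_cbox_imp_0[OF gc _ IG0]) (use gpos that pi_gt3 in auto)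
  have one_at: "cnj u * EE t = 1" if "t \<in> {0..2*pi}" for t
  proof (rule unit_re1)
    show "norm (cnj u * EE t) = 1" using nu by (simp add: norm_mult EE_norm)
    show "Re (cnj u * EE t) = 1" using g0[OF that] Kp[of t] unfolding gK by simp
  qed
  have "cnj u * EE 0 = cnj u * EE pi" using one_at[of 0] one_at[of pi] by simp
  then have "EE 0 = EE pi" using nu by auto
  moreover have "EE 0 = exp \<i>" by (simp add: EE_def psi_def)
  moreover have "EE pi = -1"
  proof -
    have "psi pi = pi" using psi_le[of pi] aabb(6) by simp
    then show ?thesis by (simp add: EE_def exp_pi_i mult.commute)
  qed
  ultimately have "exp \<i> = -1" by simp
  then have "Re (exp \<i>) = -1" by simp
  then have "cos (1::real) = -1" using Re_exp[of \<i>] by simp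
  moreover have "cos (1::real) > 0" using pi_gt3 by (intro cos_gt_zero) auto
  ultimately show False by simp
qed


definition psid :: "real \<Rightarrow> real" where "psid t = (if t < pi then aa else bb)"
definition Fdot :: "real \<Rightarrow> complex" where "Fdot t = \<i> * of_real (psid t) * EE t"

lemma Fdot_meas: "Fdot \<in> borel_measurable (lebesgue_on S)"
proof -
  have e: "EE \<in> borel_measurable borel" by (rule borel_measurable_continuous_onI[OF EE_cont])
  have p: "psid \<in> borel_measurable borel" unfolding psid_def by measurable
  have "Fdot \<in> borel_measurable borel" unfolding Fdot_def[abs_def] using e p by measurable
  then have "Fdot \<in> borel_measurable lborel" by (simp add: measurable_lborel1)
  then have "Fdot \<in> borel_measurable lebesgue" by (rule measurable_completion)
  then show ?thesis by (rule measurable_restrict_space1)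
qed

lemma Fdot_bound: "norm (Fdot t) \<le> bb"
  unfolding Fdot_def psid_def using aabb by (auto simp: norm_mult EE_norm)

lemma Fdot_deriv: assumes t: "0 < t" "t < 2*pi" "t \<noteq> pi"
  shows "((\<lambda>s. Fb (exp (\<i> * of_real s))) has_vector_derivative Fdot t) (at t)"
proof (cases "t < pi")
  case True
  have d: "((\<lambda>y. exp (\<i> * of_real (1 + aa*y))) has_vector_derivative (\<i> * of_real aa * exp (\<i> * of_real (1 + aa*t)))) (at t)"
    by (rule hvd_exp_lin)
  have "((\<lambda>s. Fb (exp (\<i> * of_real s))) has_vector_derivative (\<i> * of_real aa * exp (\<i> * of_real (1 + aa*t)))) (at t)"
  proof (rule has_vector_derivative_transform_within_open[OF d, of "{0<..<pi}"])
    show "open {0<..<pi}" by simp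
    show "t \<in> {0<..<pi}" using t True by simp
    fix y :: real assume "y \<in> {0<..<pi}"
    then show "exp (\<i> * of_real (1 + aa*y)) = Fb (exp (\<i> * of_real y))"
      using FbE[of y] pi_gt_zero by (simp add: EE_def psi_le)
  qed
  then show ?thesis using True by (simp add: Fdot_def psid_def EE_def psi_le)
next
  case False
  then have tp: "t > pi" using t by simp
  have d: "((\<lambda>y. exp (\<i> * of_real (-1 + bb*y))) has_vector_derivative (\<i> * of_real bb * exp (\<i> * of_real (-1 + bb*t)))) (at t)"
    by (rule hvd_exp_lin)
  have "((\<lambda>s. Fb (exp (\<i> * of_real s))) has_vector_derivative (\<i> * of_real bb * exp (\<i> * of_real (-1 + bb*t)))) (at t)"
  proof (rule has_vector_derivative_transform_within_open[OF d, of "{pi<..<2*pi}"])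
    show "open {pi<..<2*pi}" by simp
    show "t \<in> {pi<..<2*pi}" using t tp by simp
    fix y :: real assume "y \<in> {pi<..<2*pi}"
    then show "exp (\<i> * of_real (-1 + bb*y)) = Fb (exp (\<i> * of_real y))"
      using FbE[of y] pi_gt_zero by (simp add: EE_def psi_ge)
  qed
  then show ?thesis using tp by (simp add: Fdot_def psid_def EE_def psi_ge)
qed

lemma A1b: "\<exists>Fdot. (AE t in lebesgue_on {0<..<2*pi}.
                     ((\<lambda>s. Fb (exp (\<i> * complex_of_real s))) has_vector_derivative Fdot t) (at t))
                 \<and> in_Linf {0<..<2*pi} Fdot"
proof (intro exI conjI)
  have "AE t in lborel. t \<noteq> pi" by (rule AE_lborel_singleton)
  then have "AE t in lebesgue. t \<noteq> pi" by (rule AE_completion)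
  then have "AE t in lebesgue_on {0<..<2*pi}. t \<noteq> pi"
    by (subst AE_restrict_space_iff) (auto elim: eventually_mono)
  then show "AE t in lebesgue_on {0<..<2*pi}. ((\<lambda>s. Fb (exp (\<i> * complex_of_real s))) has_vector_derivative Fdot t) (at t)"
    by (rule lebesgue_on_mono) (auto intro: Fdot_deriv)
  show "in_Linf {0<..<2*pi} Fdot" unfolding in_Linf_def
    using Fdot_meas Fdot_bound by (auto intro!: exI[of _ bb])
qed

lemma A1a: "abs_continuous_on {0..2*pi} (\<lambda>t. Fb (exp (\<i> * complex_of_real t)))"
  unfolding abs_continuous_on_def
proof (intro allI impI)
  fix e :: real assume e: "e > 0"
  have bb0: "bb > 0" using aabb by simp
  show "\<exists>\<delta>>0. \<forall>n a b. (\<forall>i<n. a i \<le> b i \<and> {a i..b i} \<subseteq> {0..2*pi}) \<and>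
            (\<forall>i<n. \<forall>j<n. i \<noteq> j \<longrightarrow> b i \<le> a j \<or> b j \<le> a i) \<and> (\<Sum>i<n. b i - a i) < \<delta> \<longrightarrow>
            (\<Sum>i<n. norm (Fb (exp (\<i> * complex_of_real (b i))) - Fb (exp (\<i> * complex_of_real (a i))))) < e"
  proof (intro exI[of _ "e / bb"] conjI allI impI)
    show "e / bb > 0" using e bb0 by simp
    fix n a b
    assume h: "(\<forall>i<n. a i \<le> b i \<and> {a i..b i} \<subseteq> {0..2*pi}) \<and>
            (\<forall>i<n. \<forall>j<n. i \<noteq> j \<longrightarrow> b i \<le> a j \<or> b j \<le> a i) \<and> (\<Sum>i<n. b i - a i) < e / bb"
    have "(\<Sum>i<n. norm (Fb (exp (\<i> * complex_of_real (b i))) - Fb (exp (\<i> * complex_of_real (a i)))))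
        \<le> (\<Sum>i<n. bb * (b i - a i))"
    proof (rule sum_mono)
      fix i assume i: "i \<in> {..<n}"
      then have ab: "a i \<le> b i" "{a i..b i} \<subseteq> {0..2*pi}" using h by auto
      then have "a i \<in> {0..2*pi}" "b i \<in> {0..2*pi}" by auto
      then have "Fb (exp (\<i> * complex_of_real (b i))) = EE (b i)" "Fb (exp (\<i> * complex_of_real (a i))) = EE (a i)"
        by (auto intro!: FbE)
      then show "norm (Fb (exp (\<i> * complex_of_real (b i))) - Fb (exp (\<i> * complex_of_real (a i)))) \<le> bb * (b i - a i)"
        using EE_lip[of "b i" "a i"] ab(1) by simp
    qed
    also have "\<dots> = bb * (\<Sum>i<n. b i - a i)" by (simp add: sum_distrib_left)
    also have "\<dots> < bb * (e / bb)" using h bb0 by (intro mult_strict_left_mono) auto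
    also have "\<dots> = e" using bb0 by simp
    finally show "(\<Sum>i<n. norm (Fb (exp (\<i> * complex_of_real (b i))) - Fb (exp (\<i> * complex_of_real (a i))))) < e" .
  qed
qed


theorem mainTheorem8:
  shows "(abs_continuous_on {0..2*pi} (\<lambda>t. Fb (exp (\<i> * complex_of_real t))) \<and>
          (\<exists>Fdot. (AE t in lebesgue_on {0<..<2*pi}.
                     ((\<lambda>s. Fb (exp (\<i> * complex_of_real s))) has_vector_derivative Fdot t) (at t))
                 \<and> in_Linf {0<..<2*pi} Fdot))
       \<and> (harmonic_on (ball 0 1) (poisson_integral Fb)
          \<and> (poisson_integral Fb) ` ball 0 1 \<subseteq> ball 0 1
          \<and> \<not> quasiregular_on (ball 0 1) (poisson_integral Fb))
       \<and> \<not> in_Linf (ball 0 1) (dz (poisson_integral Fb))"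
proof (intro conjI)
  show "abs_continuous_on {0..2*pi} (\<lambda>t. Fb (exp (\<i> * complex_of_real t)))" by (rule A1a)
  show "\<exists>Fdot. (AE t in lebesgue_on {0<..<2*pi}.
                     ((\<lambda>s. Fb (exp (\<i> * complex_of_real s))) has_vector_derivative Fdot t) (at t))
                 \<and> in_Linf {0<..<2*pi} Fdot" by (rule A1b)
  show "harmonic_on (ball 0 1) (poisson_integral Fb)" by (rule harmonic_w)
  show "(poisson_integral Fb) ` ball 0 1 \<subseteq> ball 0 1" using w_in_ball by blast
  show "\<not> quasiregular_on (ball 0 1) (poisson_integral Fb)" by (rule not_qr)
  show "\<not> in_Linf (ball 0 1) (dz (poisson_integral Fb))" by (rule not_Linf)
qed

end
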